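(* (a) Let $\mu$ be a real matrix measure on $[0,1]$ with canonical moments $U_n^\mu$, let $a<b$, $\gamma(x)=(b-a)x+a$, and let $\nu=\mu^\gamma$ be the image measure on $[a,b]$ with canonical moments $U_n^\nu$. Then $U_n^\nu=U_n^\mu$ whenever these are defined. (b) If a matrix measure on an interval $[a,b]$ is symmetric (invariant under the reflection $x\mapsto a+b-x$), then its odd canonical moments satisfy $U_{2n-1}=\tfrac12I_p$ whenever defined. (c) Let $\mu$ be a matrix measure on $[0,1]$ with canonical moments $U_n^\mu$ and let $\sigma$ be the symmetric matrix measure on $[-1,1]$ determined by $\sigma([-x,x])=\mu([0,x^2])$, with canonical moments $U_n^\sigma$. Then $U^\sigma_{2n-1}=\tfrac12I_p$ and $U^\sigma_{2n}=U^\mu_n$ whenever defined.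
   Context: A real matrix measure on an interval $[a,b]$ is a $p\times p$ matrix of signed Borel measures $\mu$ with $\mu(B)$ symmetric nonnegative definite for every Borel $B\subset[a,b]$ and $\mu([a,b])=I_p$; its moments are $T_k=\int x^kd\mu(x)$, $T_0=I_p$. For given moments $T_0,\dots,T_{k-1}$ of such a measure, let $T_k^+$ and $T_k^-$ denote the maximal and minimal matrices (in the Loewner order) $T$ such that $(T_1,\dots,T_{k-1},T)$ is the moment vector of a matrix measure on $[a,b]$. When $T_k^+-T_k^->0$ (positive definite), the ($k$th, symmetric) canonical moment is $U_k=(T_k^+-T_k^-)^{-1/2}(T_k-T_k^-)(T_k^+-T_k^-)^{-1/2}$; otherwise it is undefined. (For $[0,1]$ these extremes $S_k^\pm$ are given by explicit Hankel-matrix formulas and the canonical moments are defined whenever the moment vector lies in the interior of the moment space.) *)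

theory Defs
  imports "HOL-Analysis.Analysis"
begin

definition psd_mat :: "real^'p^'p \<Rightarrow> bool" where
  "psd_mat M \<longleftrightarrow> (\<forall>x. 0 \<le> x \<bullet> (M *v x))"

definition pd_mat :: "real^'p^'p \<Rightarrow> bool" where
  "pd_mat M \<longleftrightarrow> (\<forall>x. x \<noteq> 0 \<longrightarrow> 0 < x \<bullet> (M *v x))"

definition loewner_le :: "real^'p^'p \<Rightarrow> real^'p^'p \<Rightarrow> bool" where
  "loewner_le A B \<longleftrightarrow> psd_mat (B - A)"

definition mat_sqrt :: "real^'p^'p \<Rightarrow> real^'p^'p" where
  "mat_sqrt A = (THE S. transpose S = S \<and> pd_mat S \<and> S ** S = A)"

text \<open>A finite signed Borel measure on [a,b] (given as a real-valued set function,
  extended by zero outside [a,b]) is represented through a Jordan-type decomposition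
  s = M1 - M2 with M1, M2 finite Borel measures concentrated on [a,b].\<close>
definition signed_rep :: "real \<Rightarrow> real \<Rightarrow> (real set \<Rightarrow> real) \<Rightarrow> real measure \<Rightarrow> real measure \<Rightarrow> bool" where
  "signed_rep a b s M1 M2 \<longleftrightarrow>
     sets M1 = sets borel \<and> sets M2 = sets borel \<and>
     finite_measure M1 \<and> finite_measure M2 \<and>
     emeasure M1 (- {a..b}) = 0 \<and> emeasure M2 (- {a..b}) = 0 \<and>
     (\<forall>B \<in> sets borel. s B = measure M1 B - measure M2 B)"

definition signed_borel_measure :: "real \<Rightarrow> real \<Rightarrow> (real set \<Rightarrow> real) \<Rightarrow> bool" where
  "signed_borel_measure a b s \<longleftrightarrow> (\<exists>M1 M2. signed_rep a b s M1 M2)"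

text \<open>Integral of f with respect to a signed measure (independent of the chosen decomposition).\<close>
definition signed_integral :: "real \<Rightarrow> real \<Rightarrow> (real set \<Rightarrow> real) \<Rightarrow> (real \<Rightarrow> real) \<Rightarrow> real" where
  "signed_integral a b s f =
     (let P = (SOME P. signed_rep a b s (fst P) (snd P))
      in integral\<^sup>L (fst P) f - integral\<^sup>L (snd P) f)"

definition matrix_measure :: "real \<Rightarrow> real \<Rightarrow> (real set \<Rightarrow> real^'p^'p) \<Rightarrow> bool" where
  "matrix_measure a b \<mu> \<longleftrightarrow>
     (\<forall>i j. signed_borel_measure a b (\<lambda>B. \<mu> B $ i $ j)) \<and>
     (\<forall>B \<in> sets borel. B \<subseteq> {a..b} \<longrightarrow> transpose (\<mu> B) = \<mu> B \<and> psd_mat (\<mu> B)) \<and>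
     \<mu> {a..b} = mat 1"

definition mat_moment :: "real \<Rightarrow> real \<Rightarrow> (real set \<Rightarrow> real^'p^'p) \<Rightarrow> nat \<Rightarrow> real^'p^'p" where
  "mat_moment a b \<mu> k = (\<chi> i j. signed_integral a b (\<lambda>B. \<mu> B $ i $ j) (\<lambda>x. x ^ k))"

definition moment_range :: "real \<Rightarrow> real \<Rightarrow> (real set \<Rightarrow> real^'p^'p) \<Rightarrow> nat \<Rightarrow> (real^'p^'p) set" where
  "moment_range a b \<mu> k = {T. \<exists>\<mu>'. matrix_measure a b \<mu>' \<and>
      (\<forall>j<k. mat_moment a b \<mu>' j = mat_moment a b \<mu> j) \<and> mat_moment a b \<mu>' k = T}"

definition is_upper_moment :: "real \<Rightarrow> real \<Rightarrow> (real set \<Rightarrow> real^'p^'p) \<Rightarrow> nat \<Rightarrow> real^'p^'p \<Rightarrow> bool" where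
  "is_upper_moment a b \<mu> k T \<longleftrightarrow> T \<in> moment_range a b \<mu> k \<and> (\<forall>T' \<in> moment_range a b \<mu> k. loewner_le T' T)"

definition is_lower_moment :: "real \<Rightarrow> real \<Rightarrow> (real set \<Rightarrow> real^'p^'p) \<Rightarrow> nat \<Rightarrow> real^'p^'p \<Rightarrow> bool" where
  "is_lower_moment a b \<mu> k T \<longleftrightarrow> T \<in> moment_range a b \<mu> k \<and> (\<forall>T' \<in> moment_range a b \<mu> k. loewner_le T T')"

definition upper_moment :: "real \<Rightarrow> real \<Rightarrow> (real set \<Rightarrow> real^'p^'p) \<Rightarrow> nat \<Rightarrow> real^'p^'p" where
  "upper_moment a b \<mu> k = (THE T. is_upper_moment a b \<mu> k T)"

definition lower_moment :: "real \<Rightarrow> real \<Rightarrow> (real set \<Rightarrow> real^'p^'p) \<Rightarrow> nat \<Rightarrow> real^'p^'p" where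
  "lower_moment a b \<mu> k = (THE T. is_lower_moment a b \<mu> k T)"

definition canonical_moment :: "real \<Rightarrow> real \<Rightarrow> (real set \<Rightarrow> real^'p^'p) \<Rightarrow> nat \<Rightarrow> (real^'p^'p) option" where
  "canonical_moment a b \<mu> k =
     (if (\<exists>T. is_upper_moment a b \<mu> k T) \<and> (\<exists>T. is_lower_moment a b \<mu> k T) \<and>
         pd_mat (upper_moment a b \<mu> k - lower_moment a b \<mu> k)
      then (let R = matrix_inv (mat_sqrt (upper_moment a b \<mu> k - lower_moment a b \<mu> k))
            in Some (R ** (mat_moment a b \<mu> k - lower_moment a b \<mu> k) ** R))
      else None)"

end

theory Submission
  imports Defs
begin

lemma meas_borel: "sets M = sets borel \<Longrightarrow> f \<in> borel_measurable borel \<Longrightarrow> f \<in> borel_measurable M"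
  using measurable_cong_sets[of M borel borel borel] by auto

lemma nn_balance:
  fixes M1 M2 N1 N2 :: "real measure"
  assumes s: "sets M1 = sets borel" "sets M2 = sets borel" "sets N1 = sets borel" "sets N2 = sets borel"
  and eq: "\<And>A. A \<in> sets borel \<Longrightarrow> emeasure M1 A + emeasure N2 A = emeasure N1 A + emeasure M2 A"
  and f: "f \<in> borel_measurable borel"
  shows "(\<integral>\<^sup>+x. f x \<partial>M1) + (\<integral>\<^sup>+x. f x \<partial>N2) = (\<integral>\<^sup>+x. f x \<partial>N1) + (\<integral>\<^sup>+x. f x \<partial>M2)"
  using f
proof (induct rule: borel_measurable_induct)
  case (cong f g)
  then have "f = g" by auto
  then show ?case using cong by simp
next
  case (set A)
  then have "A \<in> sets M1" "A \<in> sets M2" "A \<in> sets N1" "A \<in> sets N2" using s by auto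
  then show ?case using eq[OF set] by simp
next
  case (mult u c)
  have m: "u \<in> borel_measurable M1" "u \<in> borel_measurable M2" "u \<in> borel_measurable N1" "u \<in> borel_measurable N2"
    using meas_borel[OF _ mult(2)] s by auto
  show ?case using mult(4) by (simp add: nn_integral_cmult m distrib_left[symmetric])
next
  case (add u v)
  have m: "u \<in> borel_measurable M1" "u \<in> borel_measurable M2" "u \<in> borel_measurable N1" "u \<in> borel_measurable N2"
    using meas_borel[OF _ add(1)] s by auto
  have m': "v \<in> borel_measurable M1" "v \<in> borel_measurable M2" "v \<in> borel_measurable N1" "v \<in> borel_measurable N2"
    using meas_borel[OF _ add(4)] s by auto
  have "(\<integral>\<^sup>+x. v x + u x \<partial>M1) + (\<integral>\<^sup>+x. v x + u x \<partial>N2)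
      = ((\<integral>\<^sup>+x. v x \<partial>M1) + (\<integral>\<^sup>+x. v x \<partial>N2)) + ((\<integral>\<^sup>+x. u x \<partial>M1) + (\<integral>\<^sup>+x. u x \<partial>N2))"
    by (simp add: nn_integral_add m m' ac_simps)
  also have "\<dots> = ((\<integral>\<^sup>+x. v x \<partial>N1) + (\<integral>\<^sup>+x. v x \<partial>M2)) + ((\<integral>\<^sup>+x. u x \<partial>N1) + (\<integral>\<^sup>+x. u x \<partial>M2))"
    using add(3,7) by simp
  also have "\<dots> = (\<integral>\<^sup>+x. v x + u x \<partial>N1) + (\<integral>\<^sup>+x. v x + u x \<partial>M2)"
    by (simp add: nn_integral_add m m' ac_simps)
  finally show ?case .
next
  case (seq U)
  have m: "\<And>i. U i \<in> borel_measurable M1" "\<And>i. U i \<in> borel_measurable M2" "\<And>i. U i \<in> borel_measurable N1" "\<And>i. U i \<in> borel_measurable N2"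
    using meas_borel[OF _ seq(1)] s by auto
  have inc: "incseq (\<lambda>i. \<integral>\<^sup>+x. U i x \<partial>M)" for M
    using seq(4) unfolding incseq_def by (auto intro!: nn_integral_mono simp: le_fun_def)
  have conv: "(\<integral>\<^sup>+x. (SUP i. U i) x \<partial>M) = (SUP i. \<integral>\<^sup>+x. U i x \<partial>M)" if "\<And>i. U i \<in> borel_measurable M" for M
    unfolding SUP_apply using nn_integral_monotone_convergence_SUP[OF seq(4) that] .
  show ?case
    unfolding conv[OF m(1)] conv[OF m(2)] conv[OF m(3)] conv[OF m(4)]
    by (simp add: ennreal_SUP_add[OF inc inc, symmetric] seq(3))
qed

lemma space_borel_eq: "sets M = sets borel \<Longrightarrow> space M = UNIV"
  using sets_eq_imp_space_eq by fastforce

lemma AE_conc: fixes M :: "real measure" assumes "sets M = sets borel" "emeasure M (- {a..b}) = 0"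
  shows "AE x in M. x \<in> {a..b::real}"
proof (rule AE_I'[of "- {a..b}"])
  show "- {a..b} \<in> null_sets M" using assms by (simp add: null_sets_def)
  show "{x \<in> space M. x \<notin> {a..b}} \<subseteq> - {a..b}" by auto
qed

lemma integ_conc: fixes M :: "real measure" and f :: "real \<Rightarrow> real" assumes "sets M = sets borel" "finite_measure M" "emeasure M (- {a..b}) = 0"
  "f \<in> borel_measurable borel" "\<forall>x\<in>{a..b}. \<bar>f x\<bar> \<le> (C::real)"
  shows "integrable M f"
proof -
  interpret finite_measure M by fact
  show ?thesis
  proof (rule integrable_const_bound[of _ C])
    show "AE x in M. norm (f x) \<le> C" using AE_conc[OF assms(1,3)] assms(5) by (auto elim!: AE_mp)
    show "f \<in> borel_measurable M" using meas_borel assms by blast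
  qed
qed

lemma real_balance:
  fixes M1 M2 N1 N2 :: "real measure" and g :: "real \<Rightarrow> real"
  assumes s: "sets M1 = sets borel" "sets M2 = sets borel" "sets N1 = sets borel" "sets N2 = sets borel"
  and fm: "finite_measure M1" "finite_measure M2" "finite_measure N1" "finite_measure N2"
  and eq: "\<And>A. A \<in> sets borel \<Longrightarrow> measure M1 A - measure M2 A = measure N1 A - measure N2 A"
  and g: "g \<in> borel_measurable borel" "\<And>x. 0 \<le> g x"
  and i: "integrable M1 g" "integrable M2 g" "integrable N1 g" "integrable N2 g"
  shows "integral\<^sup>L M1 g + integral\<^sup>L N2 g = integral\<^sup>L N1 g + integral\<^sup>L M2 g"
proof -
  have eq': "emeasure M1 A + emeasure N2 A = emeasure N1 A + emeasure M2 A" if "A \<in> sets borel" for A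
  proof -
    have "emeasure M1 A + emeasure N2 A = ennreal (measure M1 A + measure N2 A)"
      using fm by (simp add: finite_measure.emeasure_eq_measure ennreal_plus)
    also have "measure M1 A + measure N2 A = measure N1 A + measure M2 A" using eq[OF that] by simp
    also have "ennreal (measure N1 A + measure M2 A) = emeasure N1 A + emeasure M2 A"
      using fm by (simp add: finite_measure.emeasure_eq_measure ennreal_plus)
    finally show ?thesis .
  qed
  have gm: "(\<lambda>x. ennreal (g x)) \<in> borel_measurable borel" using g by simp
  from nn_balance[OF s eq' gm]
  have "ennreal (integral\<^sup>L M1 g) + ennreal (integral\<^sup>L N2 g) = ennreal (integral\<^sup>L N1 g) + ennreal (integral\<^sup>L M2 g)"
    using i g(2) by (simp add: nn_integral_eq_integral)
  then show ?thesis using g(2)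
    by (simp add: ennreal_plus[symmetric] integral_nonneg_AE del: ennreal_plus)
qed

lemma int_balance:
  fixes M1 M2 N1 N2 :: "real measure" and f :: "real \<Rightarrow> real"
  assumes s: "sets M1 = sets borel" "sets M2 = sets borel" "sets N1 = sets borel" "sets N2 = sets borel"
  and fm: "finite_measure M1" "finite_measure M2" "finite_measure N1" "finite_measure N2"
  and eq: "\<And>A. A \<in> sets borel \<Longrightarrow> measure M1 A - measure M2 A = measure N1 A - measure N2 A"
  and f: "f \<in> borel_measurable borel"
  and i: "integrable M1 f" "integrable M2 f" "integrable N1 f" "integrable N2 f"
  shows "integral\<^sup>L M1 f - integral\<^sup>L M2 f = integral\<^sup>L N1 f - integral\<^sup>L N2 f"
proof -
  define g1 where "g1 x = max (f x) 0" for x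
  define g2 where "g2 x = max (- f x) 0" for x
  have fg: "f = (\<lambda>x. g1 x - g2 x)" unfolding g1_def g2_def by (auto simp: max_def)
  have im: "integrable M g1 \<and> integrable M g2" if "integrable M f" for M
    unfolding g1_def g2_def using that by (auto intro: integrable_max)
  have b1: "integral\<^sup>L M1 g1 + integral\<^sup>L N2 g1 = integral\<^sup>L N1 g1 + integral\<^sup>L M2 g1"
    by (rule real_balance[OF s fm eq]) (use f im i in \<open>auto simp: g1_def\<close>)
  have b2: "integral\<^sup>L M1 g2 + integral\<^sup>L N2 g2 = integral\<^sup>L N1 g2 + integral\<^sup>L M2 g2"
    by (rule real_balance[OF s fm eq]) (use f im i in \<open>auto simp: g2_def\<close>)
  show ?thesis unfolding fg using im i b1 b2 by (simp add: integral_diff)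
qed

lemma signed_integral_rep:
  assumes r: "signed_rep a b s M1 M2" and f: "f \<in> borel_measurable borel" and C: "\<forall>x\<in>{a..b}. \<bar>f x\<bar> \<le> C"
  shows "signed_integral a b s f = integral\<^sup>L M1 f - integral\<^sup>L M2 f"
proof -
  define P where "P = (SOME P. signed_rep a b s (fst P) (snd P))"
  have "signed_rep a b s (fst P) (snd P)" unfolding P_def
    by (rule someI_ex) (use r in auto)
  then have r': "signed_rep a b s (fst P) (snd P)" .
  have I: "integrable M f" if "sets M = sets borel" "finite_measure M" "emeasure M (- {a..b}) = 0" for M
    using integ_conc[OF that f C] .
  have "integral\<^sup>L (fst P) f - integral\<^sup>L (snd P) f = integral\<^sup>L M1 f - integral\<^sup>L M2 f"
    using r r' unfolding signed_rep_def
    by (intro int_balance f I) auto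
  then show ?thesis unfolding signed_integral_def Let_def P_def .
qed

lemma signed_rep_cong: "(\<forall>B\<in>sets borel. s B = s' B) \<Longrightarrow> signed_rep a b s = signed_rep a b s'"
  unfolding signed_rep_def by (intro ext) auto

lemma signed_integral_cong: "(\<forall>B\<in>sets borel. s B = s' B) \<Longrightarrow> signed_integral a b s f = signed_integral a b s' f"
  unfolding signed_integral_def using signed_rep_cong by metis

lemma signed_borel_cong: "(\<forall>B\<in>sets borel. s B = s' B) \<Longrightarrow> signed_borel_measure a b s = signed_borel_measure a b s'"
  unfolding signed_borel_measure_def using signed_rep_cong by metis

lemma rep_conc: assumes r: "signed_rep a b s M1 M2" and B: "B \<in> sets borel"
  shows "s B = s (B \<inter> {a..b})"
proof -
  have s: "sets M1 = sets borel" "sets M2 = sets borel" "emeasure M1 (- {a..b}) = 0" "emeasure M2 (- {a..b}) = 0"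
    using r unfolding signed_rep_def by auto
  have "measure M B = measure M (B \<inter> {a..b})" if "sets M = sets borel" "emeasure M (- {a..b}) = 0" for M
    by (rule measure_eq_AE) (use AE_conc[OF that] B that in \<open>auto elim!: AE_mp\<close>)
  then show ?thesis using r s B unfolding signed_rep_def by auto
qed

lemma push_rep:
  assumes r: "signed_rep a b s M1 M2" and phi: "\<phi> \<in> borel_measurable borel"
    and maps: "\<forall>x\<in>{a..b}. \<phi> x \<in> {a'..b'}"
  shows "signed_rep a' b' (\<lambda>B. s (\<phi> -` B)) (distr M1 borel \<phi>) (distr M2 borel \<phi>)"
proof -
  have s: "sets M1 = sets borel" "sets M2 = sets borel" "emeasure M1 (- {a..b}) = 0" "emeasure M2 (- {a..b}) = 0"
    "finite_measure M1" "finite_measure M2" "\<forall>B\<in>sets borel. s B = measure M1 B - measure M2 B"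
    using r unfolding signed_rep_def by auto
  have pm: "\<phi> \<in> measurable M borel" if "sets M = sets borel" for M using meas_borel[OF that phi] .
  have sp: "space M = UNIV" if "sets M = sets borel" for M using space_borel_eq[OF that] .
  have E0: "emeasure (distr M borel \<phi>) (- {a'..b'}) = 0" if "sets M = sets borel" "emeasure M (- {a..b}) = 0" for M
  proof -
    have "emeasure (distr M borel \<phi>) (- {a'..b'}) = emeasure M (\<phi> -` (- {a'..b'}))"
      using emeasure_distr[OF pm[OF that(1)], of "- {a'..b'}"] sp[OF that(1)] by simp
    also have "\<dots> \<le> emeasure M (- {a..b})"
      by (rule emeasure_mono) (use maps that in auto)
    finally show ?thesis using that by simp
  qed
  show ?thesis unfolding signed_rep_def
  proof (intro conjI ballI)
    show "sets (distr M1 borel \<phi>) = sets borel" "sets (distr M2 borel \<phi>) = sets borel" by auto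
    show "finite_measure (distr M1 borel \<phi>)" using finite_measure.finite_measure_distr[OF s(5) pm[OF s(1)]] .
    show "finite_measure (distr M2 borel \<phi>)" using finite_measure.finite_measure_distr[OF s(6) pm[OF s(2)]] .
    show "emeasure (distr M1 borel \<phi>) (- {a'..b'}) = 0" using E0 s by auto
    show "emeasure (distr M2 borel \<phi>) (- {a'..b'}) = 0" using E0 s by auto
    fix B :: "real set" assume B: "B \<in> sets borel"
    have pB: "\<phi> -` B \<in> sets borel" using measurable_sets[OF phi B] by simp
    show "s (\<phi> -` B) = measure (distr M1 borel \<phi>) B - measure (distr M2 borel \<phi>) B"
      using s(7) pB B measure_distr[OF pm[OF s(1)] B] measure_distr[OF pm[OF s(2)] B] sp[OF s(1)] sp[OF s(2)] by simp
  qed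
qed

lemma push_integral:
  assumes r: "signed_borel_measure a b s" and phi: "\<phi> \<in> borel_measurable borel"
    and maps: "\<forall>x\<in>{a..b}. \<phi> x \<in> {a'..b'}"
    and f: "f \<in> borel_measurable borel" and C: "\<forall>x\<in>{a'..b'}. \<bar>f x\<bar> \<le> C"
  shows "signed_integral a' b' (\<lambda>B. s (\<phi> -` B)) f = signed_integral a b s (\<lambda>x. f (\<phi> x))"
proof -
  obtain M1 M2 where r: "signed_rep a b s M1 M2" using r unfolding signed_borel_measure_def by blast
  have s: "sets M1 = sets borel" "sets M2 = sets borel" using r unfolding signed_rep_def by auto
  have pm: "\<phi> \<in> measurable M borel" if "sets M = sets borel" for M using meas_borel[OF that phi] .
  have "signed_integral a' b' (\<lambda>B. s (\<phi> -` B)) f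
     = integral\<^sup>L (distr M1 borel \<phi>) f - integral\<^sup>L (distr M2 borel \<phi>) f"
    by (rule signed_integral_rep[OF push_rep[OF r phi maps] f C])
  also have "\<dots> = integral\<^sup>L M1 (\<lambda>x. f (\<phi> x)) - integral\<^sup>L M2 (\<lambda>x. f (\<phi> x))"
    using integral_distr[OF pm[OF s(1)] f] integral_distr[OF pm[OF s(2)] f] by simp
  also have "\<dots> = signed_integral a b s (\<lambda>x. f (\<phi> x))"
    by (rule signed_integral_rep[OF r, symmetric]) (use phi f maps C in auto)
  finally show ?thesis .
qed

lemma push_sbm:
  assumes r: "signed_borel_measure a b s" and phi: "\<phi> \<in> borel_measurable borel"
    and maps: "\<forall>x\<in>{a..b}. \<phi> x \<in> {a'..b'}"
  shows "signed_borel_measure a' b' (\<lambda>B. s (\<phi> -` B))"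
  using push_rep[OF _ phi maps] r unfolding signed_borel_measure_def by blast

lemma pow_bound: "\<forall>x\<in>{a..b::real}. \<bar>x ^ k\<bar> \<le> (\<bar>a\<bar> + \<bar>b\<bar>) ^ k"
proof
  fix x assume "x \<in> {a..b}"
  then have "\<bar>x\<bar> \<le> \<bar>a\<bar> + \<bar>b\<bar>" by auto
  then show "\<bar>x ^ k\<bar> \<le> (\<bar>a\<bar> + \<bar>b\<bar>) ^ k" by (simp add: power_abs power_mono)
qed

lemma signed_integral_lin:
  assumes r: "signed_borel_measure a b s"
  shows "signed_integral a b s (\<lambda>x. \<Sum>j\<le>k. c j * x ^ j) = (\<Sum>j\<le>k. c j * signed_integral a b s (\<lambda>x. x ^ j))"
proof -
  obtain M1 M2 where r: "signed_rep a b s M1 M2" using r unfolding signed_borel_measure_def by blast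
  have I: "integrable M (\<lambda>x. x ^ j)" if "sets M = sets borel" "finite_measure M" "emeasure M (- {a..b}) = 0" for M j
    using integ_conc[OF that _ pow_bound] by simp
  have Ii: "integrable M1 (\<lambda>x. x ^ j)" "integrable M2 (\<lambda>x. x ^ j)" for j
    using I r unfolding signed_rep_def by auto
  have C: "\<forall>x\<in>{a..b}. \<bar>\<Sum>j\<le>k. c j * x ^ j\<bar> \<le> (\<Sum>j\<le>k. \<bar>c j\<bar> * (\<bar>a\<bar> + \<bar>b\<bar>) ^ j)"
  proof
    fix x assume x: "x \<in> {a..b}"
    have "\<bar>\<Sum>j\<le>k. c j * x ^ j\<bar> \<le> (\<Sum>j\<le>k. \<bar>c j * x ^ j\<bar>)" by (rule sum_abs)
    also have "\<dots> \<le> (\<Sum>j\<le>k. \<bar>c j\<bar> * (\<bar>a\<bar> + \<bar>b\<bar>) ^ j)"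
      using pow_bound x by (intro sum_mono) (auto simp: abs_mult intro: mult_left_mono)
    finally show "\<bar>\<Sum>j\<le>k. c j * x ^ j\<bar> \<le> (\<Sum>j\<le>k. \<bar>c j\<bar> * (\<bar>a\<bar> + \<bar>b\<bar>) ^ j)" .
  qed
  have "signed_integral a b s (\<lambda>x. \<Sum>j\<le>k. c j * x ^ j) = integral\<^sup>L M1 (\<lambda>x. \<Sum>j\<le>k. c j * x ^ j) - integral\<^sup>L M2 (\<lambda>x. \<Sum>j\<le>k. c j * x ^ j)"
    by (rule signed_integral_rep[OF r _ C]) simp
  also have "\<dots> = (\<Sum>j\<le>k. c j * (integral\<^sup>L M1 (\<lambda>x. x ^ j) - integral\<^sup>L M2 (\<lambda>x. x ^ j)))"
    using Ii by (simp add: integral_sum sum_subtractf right_diff_distrib)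
  also have "\<dots> = (\<Sum>j\<le>k. c j * signed_integral a b s (\<lambda>x. x ^ j))"
    by (intro sum.cong refl) (simp add: signed_integral_rep[OF r _ pow_bound])
  finally show ?thesis .
qed

lemma signed_integral_cong_fun:
  assumes r: "signed_borel_measure a b s" and fg: "\<forall>x\<in>{a..b}. f x = g x"
    and f: "f \<in> borel_measurable borel" "\<forall>x\<in>{a..b}. \<bar>f x\<bar> \<le> C"
    and g: "g \<in> borel_measurable borel"
  shows "signed_integral a b s f = signed_integral a b s g"
proof -
  obtain M1 M2 where r: "signed_rep a b s M1 M2" using r unfolding signed_borel_measure_def by blast
  have gC: "\<forall>x\<in>{a..b}. \<bar>g x\<bar> \<le> C" using f fg by auto
  have e: "integral\<^sup>L M f = integral\<^sup>L M g" if "sets M = sets borel" "emeasure M (- {a..b}) = 0" for M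
    by (rule integral_cong_AE) (use meas_borel[OF that(1)] f g AE_conc[OF that] fg in \<open>auto elim!: AE_mp\<close>)
  show ?thesis using signed_integral_rep[OF r f] signed_integral_rep[OF r g gC] e r
    unfolding signed_rep_def by auto
qed

lemma half_enn: "0 \<le> x \<Longrightarrow> ennreal (x/2) = ennreal (1/2) * ennreal x"
proof -
  assume "0 \<le> x"
  have "ennreal (x/2) = ennreal (1/2 * x)" by simp
  also have "\<dots> = ennreal (1/2) * ennreal x" by (rule ennreal_mult) (use \<open>0 \<le> x\<close> in auto)
  finally show ?thesis .
qed

definition avg :: "real measure \<Rightarrow> real measure \<Rightarrow> real measure" where
  "avg M N = measure_of UNIV (sets borel) (\<lambda>A. ennreal (1/2) * (emeasure M A + emeasure N A))"

lemma sa_borel: "sigma_algebra UNIV (sets (borel::real measure))"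
  using sets.sigma_algebra_axioms[of "borel::real measure"] by simp

lemma sets_avg[simp]: "sets (avg M N) = sets borel"
  unfolding avg_def using sa_borel by (simp add: sigma_algebra.sigma_sets_eq)

lemma space_avg[simp]: "space (avg M N) = UNIV"
  unfolding avg_def by (simp add: space_measure_of_conv)

lemma emeasure_avg:
  assumes s: "sets M = sets borel" "sets N = sets borel" and A: "A \<in> sets borel"
  shows "emeasure (avg M N) A = ennreal (1/2) * (emeasure M A + emeasure N A)"
  unfolding avg_def
proof (rule emeasure_measure_of_sigma[OF sa_borel _ _ A])
  show "positive (sets borel) (\<lambda>A. ennreal (1/2) * (emeasure M A + emeasure N A))"
    by (simp add: positive_def)
  show "countably_additive (sets borel) (\<lambda>A. ennreal (1/2) * (emeasure M A + emeasure N A))"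
    unfolding countably_additive_def
  proof (intro allI impI)
    fix A :: "nat \<Rightarrow> real set" assume A: "range A \<subseteq> sets borel" "disjoint_family A"
    have "(\<Sum>i. emeasure M (A i) + emeasure N (A i)) = (\<Sum>i. emeasure M (A i)) + (\<Sum>i. emeasure N (A i))"
      by (rule suminf_add[symmetric]) auto
    also have "\<dots> = emeasure M (\<Union>i. A i) + emeasure N (\<Union>i. A i)"
      using A s by (simp add: suminf_emeasure)
    finally show "(\<Sum>i. ennreal (1/2) * (emeasure M (A i) + emeasure N (A i))) = ennreal (1/2) * (emeasure M (\<Union> (range A)) + emeasure N (\<Union> (range A)))"
      by simp
  qed
qed

lemma nn_integral_avg:
  fixes f :: "real \<Rightarrow> ennreal"
  assumes s: "sets M = sets borel" "sets N = sets borel" and f: "f \<in> borel_measurable borel"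
  shows "(\<integral>\<^sup>+x. f x \<partial>avg M N) = ennreal (1/2) * ((\<integral>\<^sup>+x. f x \<partial>M) + (\<integral>\<^sup>+x. f x \<partial>N))"
  using f
proof (induct rule: borel_measurable_induct)
  case (cong f g)
  then have "f = g" by auto
  then show ?case using cong by simp
next
  case (set A)
  then have "A \<in> sets M" "A \<in> sets N" "A \<in> sets (avg M N)" using s by auto
  then show ?case using emeasure_avg[OF s set] by simp
next
  case (mult u c)
  have m: "u \<in> borel_measurable M" "u \<in> borel_measurable N" "u \<in> borel_measurable (avg M N)"
    using meas_borel[OF _ mult(2)] s by auto
  show ?case using mult(4) by (simp add: nn_integral_cmult m distrib_left mult_ac)
next
  case (add u v)
  have m: "u \<in> borel_measurable M" "u \<in> borel_measurable N" "u \<in> borel_measurable (avg M N)"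
    using meas_borel[OF _ add(1)] s by auto
  have m': "v \<in> borel_measurable M" "v \<in> borel_measurable N" "v \<in> borel_measurable (avg M N)"
    using meas_borel[OF _ add(4)] s by auto
  show ?case using add(3,7) by (simp add: nn_integral_add m m' distrib_left ac_simps)
next
  case (seq U)
  have m: "\<And>i. U i \<in> borel_measurable M" "\<And>i. U i \<in> borel_measurable N" "\<And>i. U i \<in> borel_measurable (avg M N)"
    using meas_borel[OF _ seq(1)] s by auto
  have inc: "incseq (\<lambda>i. \<integral>\<^sup>+x. U i x \<partial>M)" for M
    using seq(4) unfolding incseq_def by (auto intro!: nn_integral_mono simp: le_fun_def)
  have conv: "(\<integral>\<^sup>+x. (SUP i. U i) x \<partial>M) = (SUP i. \<integral>\<^sup>+x. U i x \<partial>M)" if "\<And>i. U i \<in> borel_measurable M" for M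
    unfolding SUP_apply using nn_integral_monotone_convergence_SUP[OF seq(4) that] .
  show ?case
    unfolding conv[OF m(1)] conv[OF m(2)] conv[OF m(3)]
    by (simp add: ennreal_SUP_add[OF inc inc, symmetric] seq(3) SUP_mult_left_ennreal)
qed

lemma finite_avg: assumes "sets M = sets borel" "sets N = sets borel" "finite_measure M" "finite_measure N"
  shows "finite_measure (avg M N)"
proof (rule finite_measureI)
  have "emeasure (avg M N) UNIV = ennreal (1/2) * (emeasure M UNIV + emeasure N UNIV)"
    using emeasure_avg[OF assms(1,2)] by simp
  moreover have "emeasure M UNIV \<noteq> \<infinity>"
    using finite_measure.emeasure_finite[OF assms(3), of "space M"] space_borel_eq[OF assms(1)] by simp
  moreover have "emeasure N UNIV \<noteq> \<infinity>"
    using finite_measure.emeasure_finite[OF assms(4), of "space N"] space_borel_eq[OF assms(2)] by simp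
  ultimately show "emeasure (avg M N) (space (avg M N)) \<noteq> \<infinity>"
    by (simp add: ennreal_mult_eq_top_iff)
qed

lemma measure_avg: assumes "sets M = sets borel" "sets N = sets borel" "finite_measure M" "finite_measure N"
  "A \<in> sets borel"
  shows "measure (avg M N) A = (measure M A + measure N A) / 2"
proof -
  have "emeasure (avg M N) A = ennreal (1/2) * (emeasure M A + emeasure N A)"
    using emeasure_avg[OF assms(1,2,5)] .
  also have "emeasure M A + emeasure N A = ennreal (measure M A + measure N A)"
    using assms by (simp add: finite_measure.emeasure_eq_measure ennreal_plus)
  also have "ennreal (1/2) * \<dots> = ennreal ((measure M A + measure N A) / 2)"
    by (rule half_enn[symmetric]) simp
  finally have "emeasure (avg M N) A = ennreal ((measure M A + measure N A) / 2)" .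
  then show ?thesis unfolding measure_def by simp
qed

lemma integral_avg_nonneg:
  fixes g :: "real \<Rightarrow> real"
  assumes s: "sets M = sets borel" "sets N = sets borel" and g: "g \<in> borel_measurable borel" "\<And>x. 0 \<le> g x"
    and i: "integrable M g" "integrable N g" "integrable (avg M N) g"
  shows "integral\<^sup>L (avg M N) g = (integral\<^sup>L M g + integral\<^sup>L N g) / 2"
proof -
  have gm: "(\<lambda>x. ennreal (g x)) \<in> borel_measurable borel" using g by simp
  from nn_integral_avg[OF s gm]
  have "ennreal (integral\<^sup>L (avg M N) g) = ennreal (1/2) * (ennreal (integral\<^sup>L M g) + ennreal (integral\<^sup>L N g))"
    using i g(2) by (simp add: nn_integral_eq_integral)
  also have "ennreal (integral\<^sup>L M g) + ennreal (integral\<^sup>L N g) = ennreal (integral\<^sup>L M g + integral\<^sup>L N g)"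
    using g(2) by (simp add: integral_nonneg_AE ennreal_plus)
  also have "ennreal (1/2) * \<dots> = ennreal ((integral\<^sup>L M g + integral\<^sup>L N g) / 2)"
    using g(2) by (intro half_enn[symmetric]) (simp add: integral_nonneg_AE)
  finally show ?thesis using g(2)
    by (subst (asm) ennreal_inj) (auto simp: integral_nonneg_AE)
qed

lemma integral_avg:
  fixes f :: "real \<Rightarrow> real"
  assumes s: "sets M = sets borel" "sets N = sets borel" and f: "f \<in> borel_measurable borel"
    and i: "integrable M f" "integrable N f" "integrable (avg M N) f"
  shows "integral\<^sup>L (avg M N) f = (integral\<^sup>L M f + integral\<^sup>L N f) / 2"
proof -
  define g1 where "g1 x = max (f x) 0" for x
  define g2 where "g2 x = max (- f x) 0" for x
  have fg: "f = (\<lambda>x. g1 x - g2 x)" unfolding g1_def g2_def by (auto simp: max_def)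
  have im: "integrable M g1 \<and> integrable M g2" if "integrable M f" for M
    unfolding g1_def g2_def using that by (auto intro: integrable_max)
  have b1: "integral\<^sup>L (avg M N) g1 = (integral\<^sup>L M g1 + integral\<^sup>L N g1) / 2"
    by (rule integral_avg_nonneg[OF s]) (use f im i in \<open>auto simp: g1_def\<close>)
  have b2: "integral\<^sup>L (avg M N) g2 = (integral\<^sup>L M g2 + integral\<^sup>L N g2) / 2"
    by (rule integral_avg_nonneg[OF s]) (use f im i in \<open>auto simp: g2_def\<close>)
  show ?thesis unfolding fg using im i b1 b2 by (simp add: integral_diff diff_divide_distrib)
qed

lemma sym_inner: fixes A :: "real^'n^'n" assumes "transpose A = A"
  shows "x \<bullet> (A *v y) = (A *v x) \<bullet> y"
proof -
  have "x \<bullet> (A *v y) = (x v* A) \<bullet> y" by (simp add: dot_lmul_matrix)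
  also have "x v* A = transpose A *v x" by simp
  finally show ?thesis using assms by simp
qed

lemma quad_zero: fixes B Q :: real assumes "\<And>t. 0 \<le> 2*t*B + t^2*Q" shows "B = 0"
proof (rule ccontr)
  assume "B \<noteq> 0"
  define c where "c = \<bar>Q\<bar> + 1"
  have c: "c > 0" "Q < c" "-Q < c" unfolding c_def by auto
  have "0 \<le> 2*(-B/c)*B + (-B/c)^2*Q" by (rule assms)
  then have "0 \<le> (2*(-B/c)*B + (-B/c)^2*Q) * c^2" using c by simp
  also have "\<dots> = B^2 * (Q - 2*c)" using c by (simp add: field_simps power2_eq_square)
  finally have "0 \<le> B^2 * (Q - 2*c)" .
  moreover have "B^2 > 0" using \<open>B \<noteq> 0\<close> by simp
  moreover have "Q - 2*c < 0" using c by simp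
  ultimately show False by (simp add: mult_pos_neg zero_le_mult_iff)
qed

lemma cont_quad: "continuous_on S (\<lambda>x. x \<bullet> ((A::real^'n^'n) *v x))"
  by (intro continuous_intros linear_continuous_on matrix_vector_mul_linear_gen  linear_linear[THEN iffD1])

lemma spectral_aux:
  fixes A :: "real^'n^'n"
  assumes sym: "transpose A = A"
  shows "subspace V \<Longrightarrow> (\<forall>x\<in>V. A *v x \<in> V) \<Longrightarrow>
    \<exists>E. E \<subseteq> V \<and> pairwise orthogonal E \<and> (\<forall>e\<in>E. norm e = 1 \<and> A *v e = (e \<bullet> (A *v e)) *\<^sub>R e) \<and> span E = V"
proof (induction "dim V" arbitrary: V rule: less_induct)
  case less
  show ?case
  proof (cases "V = {0}")
    case True then show ?thesis by (intro exI[of _ "{}"]) auto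
  next
    case False
    then obtain v where v: "v \<in> V" "v \<noteq> 0" using less.prems subspace_0 by blast
    define S where "S = sphere 0 1 \<inter> V"
    have cS: "compact S" unfolding S_def
      using closed_subspace[OF less.prems(1)] by (simp add: compact_Int_closed)
    have "v /\<^sub>R norm v \<in> S" unfolding S_def using v less.prems(1) by (simp add: subspace_scale)
    then have neS: "S \<noteq> {}" by blast
    obtain e where eS: "e \<in> S" and emax: "\<And>y. y \<in> S \<Longrightarrow> y \<bullet> (A *v y) \<le> e \<bullet> (A *v e)"
      using continuous_attains_sup[OF cS neS cont_quad] by blast
    define l where "l = e \<bullet> (A *v e)"
    have eV: "e \<in> V" and ne: "norm e = 1" using eS unfolding S_def by auto
    have ee: "e \<bullet> e = 1" using ne by (simp add: norm_eq_1)
    have q: "x \<bullet> (A *v x) \<le> l * (x \<bullet> x)" if "x \<in> V" for x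
    proof (cases "x = 0")
      case True then show ?thesis by simp
    next
      case False
      define u where "u = x /\<^sub>R norm x"
      have "u \<in> S" unfolding S_def u_def using that False less.prems(1) by (simp add: subspace_scale)
      then have "u \<bullet> (A *v u) \<le> l" using emax l_def by blast
      moreover have "u \<bullet> (A *v u) = (x \<bullet> (A *v x)) / (norm x)^2"
        unfolding u_def by (simp add: matrix_vector_mult_scaleR power2_eq_square divide_inverse)
      ultimately have "x \<bullet> (A *v x) \<le> l * (norm x)^2" using False
        by (simp add: divide_le_eq)
      then show ?thesis by (simp add: power2_norm_eq_inner)
    qed
    have B: "w \<bullet> (A *v e) = l * (w \<bullet> e)" if wV: "w \<in> V" for w
    proof -
      have "0 \<le> 2*t*(l * (w \<bullet> e) - w \<bullet> (A *v e)) + t^2 * (l * (w \<bullet> w) - w \<bullet> (A *v w))" for t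
      proof -
        have "e + t *\<^sub>R w \<in> V" using eV wV less.prems(1) by (simp add: subspace_add subspace_scale)
        from q[OF this] have "(e + t *\<^sub>R w) \<bullet> (A *v (e + t *\<^sub>R w)) \<le> l * ((e + t *\<^sub>R w) \<bullet> (e + t *\<^sub>R w))" .
        moreover have "e \<bullet> (A *v w) = w \<bullet> (A *v e)"
          using sym_inner[OF sym, of e w] by (simp add: inner_commute)
        ultimately show ?thesis
          by (simp add: matrix_vector_right_distrib matrix_vector_mult_scaleR inner_add_left inner_add_right
              algebra_simps ee l_def power2_eq_square inner_commute)
      qed
      then show ?thesis using quad_zero by force
    qed
    have eig: "A *v e = l *\<^sub>R e"
    proof -
      define w where "w = A *v e - l *\<^sub>R e"
      have "w \<in> V" unfolding w_def using less.prems eV by (simp add: subspace_diff subspace_scale)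
      from B[OF this] have "w \<bullet> w = 0" unfolding w_def
        by (simp add: inner_diff_right)
      then show ?thesis unfolding w_def by simp
    qed
    define V' where "V' = {x \<in> V. e \<bullet> x = 0}"
    have sV': "subspace V'" unfolding V'_def using less.prems(1)
      by (auto simp: subspace_def inner_add_right)
    have iV': "\<forall>x\<in>V'. A *v x \<in> V'"
    proof
      fix x assume "x \<in> V'"
      then have "x \<in> V" "e \<bullet> x = 0" unfolding V'_def by auto
      moreover have "e \<bullet> (A *v x) = (A *v e) \<bullet> x" by (rule sym_inner[OF sym])
      ultimately show "A *v x \<in> V'" unfolding V'_def using less.prems(2) eig by simp
    qed
    have "V' \<subset> V" unfolding V'_def using eV ee by (auto; metis (mono_tags, lifting) mem_Collect_eq zero_neq_one)
    then have "dim V' < dim V"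
      using dim_psubset[of V' V] sV' less.prems(1) by (metis span_eq_iff)
    from less.hyps[OF this sV' iV'] obtain E' where E': "E' \<subseteq> V'" "pairwise orthogonal E'"
      "\<forall>e\<in>E'. norm e = 1 \<and> A *v e = (e \<bullet> (A *v e)) *\<^sub>R e" "span E' = V'" by blast
    show ?thesis
    proof (intro exI[of _ "insert e E'"] conjI)
      show "insert e E' \<subseteq> V" using E'(1) eV unfolding V'_def by auto
      show "pairwise orthogonal (insert e E')"
        using E'(1,2) unfolding V'_def pairwise_insert by (auto simp: orthogonal_def inner_commute)
      show "\<forall>x\<in>insert e E'. norm x = 1 \<and> A *v x = (x \<bullet> (A *v x)) *\<^sub>R x"
        using E'(3) ne eig l_def by auto
      show "span (insert e E') = V"
      proof
        show "span (insert e E') \<subseteq> V"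
          using E'(1) eV less.prems(1) unfolding V'_def by (intro span_minimal) auto
        show "V \<subseteq> span (insert e E')"
        proof
          fix x assume "x \<in> V"
          then have "x - (e \<bullet> x) *\<^sub>R e \<in> V'" unfolding V'_def using eV less.prems(1) ee
            by (simp add: subspace_diff subspace_scale inner_diff_right)
          then show "x \<in> span (insert e E')" using E'(4) span_breakdown_eq by blast
        qed
      qed
    qed
  qed
qed

lemma spectral:
  fixes A :: "real^'n^'n" assumes "transpose A = A"
  obtains E where "finite E" "\<And>e e'. e\<in>E \<Longrightarrow> e'\<in>E \<Longrightarrow> e \<bullet> e' = (if e = e' then 1 else 0)"
    "\<And>e. e\<in>E \<Longrightarrow> A *v e = (e \<bullet> (A *v e)) *\<^sub>R e" "\<And>x. x = (\<Sum>e\<in>E. (e \<bullet> x) *\<^sub>R e)"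
proof -
  obtain E where E: "pairwise orthogonal E" "\<forall>e\<in>E. norm e = 1 \<and> A *v e = (e \<bullet> (A *v e)) *\<^sub>R e" "span E = UNIV"
    using spectral_aux[OF assms, of UNIV] by auto
  have fin: "finite E" using E(1) pairwise_orthogonal_imp_finite by blast
  have orth: "e \<bullet> e' = (if e = e' then 1 else 0)" if "e\<in>E" "e'\<in>E" for e e'
    using E(1,2) that by (auto simp: pairwise_def orthogonal_def norm_eq_1)
  have exp: "x = (\<Sum>e\<in>E. (e \<bullet> x) *\<^sub>R e)" for x
  proof -
    have "x \<in> span E" using E(3) by simp
    then obtain u where u: "x = (\<Sum>v\<in>E. u v *\<^sub>R v)" using span_finite[OF fin] by auto
    have "e \<bullet> x = u e" if "e \<in> E" for e
    proof -
      have "e \<bullet> x = (\<Sum>v\<in>E. u v * (if e = v then 1 else 0))"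
        unfolding u inner_sum_right using that by (intro sum.cong) (simp_all add: orth)
      also have "\<dots> = u e" using fin that by (simp add: if_distrib sum.delta cong: if_cong)
      finally show ?thesis .
    qed
    then show ?thesis using u by (metis (no_types, lifting) sum.cong)
  qed
  show ?thesis using that fin E orth exp by blast
qed

definition outer :: "real^'n \<Rightarrow> real^'n \<Rightarrow> real^'n^'n" where
  "outer u v = (\<chi> i j. u$i * v$j)"

lemma outer_mult: "outer u v *v x = (v \<bullet> x) *\<^sub>R u"
  by (simp add: outer_def matrix_vector_mult_def inner_vec_def vec_eq_iff sum_distrib_left mult_ac)

lemma sum_mat_mult: "(\<Sum>e\<in>E. f e) *v x = (\<Sum>e\<in>E. f e *v x)" for f :: "_ \<Rightarrow> real^'n^'m"
  by (induction E rule: infinite_finite_induct) (simp_all add: matrix_vector_mult_add_rdistrib)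

lemma mat_mult_sum: "M *v (\<Sum>e\<in>E. g e) = (\<Sum>e\<in>E. M *v g e)" for M :: "real^'n^'m"
  by (induction E rule: infinite_finite_induct) (simp_all add: matrix_vector_right_distrib)

lemma pd_inj: "pd_mat S \<Longrightarrow> S *v x = 0 \<Longrightarrow> x = 0"
  unfolding pd_mat_def by force

lemma pd_invertible: fixes S :: "real^'n^'n" shows "pd_mat S \<Longrightarrow> invertible S"
  using invertible_left_inverse matrix_left_invertible_ker pd_inj by metis

lemma inv_props: "invertible S \<Longrightarrow> S ** matrix_inv S = mat 1 \<and> matrix_inv S ** S = mat 1"
  unfolding invertible_def matrix_inv_def by (rule someI_ex)

lemma sqrt_exists_unique:
  fixes A :: "real^'n^'n" assumes sym: "transpose A = A" and pd: "pd_mat A"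
  shows "\<exists>!S. transpose S = S \<and> pd_mat S \<and> S ** S = A"
proof -
  obtain E where fin: "finite E" and orth: "\<And>e e'. e\<in>E \<Longrightarrow> e'\<in>E \<Longrightarrow> e \<bullet> e' = (if e = e' then 1 else 0)"
    and eig: "\<And>e. e\<in>E \<Longrightarrow> A *v e = (e \<bullet> (A *v e)) *\<^sub>R e" and exp: "\<And>x. x = (\<Sum>e\<in>E. (e \<bullet> x) *\<^sub>R e)"
    using spectral[OF sym] by blast
  define l where "l e = e \<bullet> (A *v e)" for e
  have lpos: "l e > 0" if "e \<in> E" for e
  proof -
    have "e \<noteq> 0" using orth[OF that that] by auto
    then show ?thesis using pd unfolding pd_mat_def l_def by auto
  qed
  have eig': "A *v e = l e *\<^sub>R e" if "e \<in> E" for e using eig[OF that] l_def by simp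
  define S where "S = (\<Sum>e\<in>E. sqrt (l e) *\<^sub>R outer e e)"
  have Sx: "S *v x = (\<Sum>e\<in>E. (sqrt (l e) * (e \<bullet> x)) *\<^sub>R e)" for x
    unfolding S_def sum_mat_mult by (simp add: scaleR_matrix_vector_assoc[symmetric] outer_mult)
  have Ax: "A *v x = (\<Sum>e\<in>E. (l e * (e \<bullet> x)) *\<^sub>R e)" for x
  proof -
    have "A *v x = A *v (\<Sum>e\<in>E. (e \<bullet> x) *\<^sub>R e)" using exp[of x] by simp
    also have "\<dots> = (\<Sum>e\<in>E. (l e * (e \<bullet> x)) *\<^sub>R e)"
      unfolding mat_mult_sum by (intro sum.cong) (simp_all add: matrix_vector_mult_scaleR eig')
    finally show ?thesis .
  qed
  have coef: "e \<bullet> (\<Sum>e'\<in>E. c e' *\<^sub>R e') = c e" if "e \<in> E" for e c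
  proof -
    have "e \<bullet> (\<Sum>e'\<in>E. c e' *\<^sub>R e') = (\<Sum>e'\<in>E. c e' * (if e = e' then 1 else 0))"
      unfolding inner_sum_right using that by (intro sum.cong) (simp_all add: orth)
    also have "\<dots> = c e" using fin that by (simp add: if_distrib sum.delta cong: if_cong)
    finally show ?thesis .
  qed
  have tS: "transpose S = S"
    unfolding S_def by (simp add: vec_eq_iff transpose_def outer_def mult.commute)
  have pS: "pd_mat S" unfolding pd_mat_def
  proof (intro allI impI)
    fix x :: "real^'n" assume "x \<noteq> 0"
    have "\<exists>e\<in>E. e \<bullet> x \<noteq> 0"
    proof (rule ccontr)
      assume "\<not> ?thesis"
      then have "(\<Sum>e\<in>E. (e \<bullet> x) *\<^sub>R e) = 0" by simp
      then show False using exp[of x] \<open>x \<noteq> 0\<close> by simp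
    qed
    then obtain e0 where e0: "e0 \<in> E" "e0 \<bullet> x \<noteq> 0" by blast
    have "x \<bullet> (S *v x) = (\<Sum>e\<in>E. sqrt (l e) * (e \<bullet> x)^2)"
      unfolding Sx inner_sum_right by (simp add: power2_eq_square inner_commute mult_ac)
    also have "\<dots> > 0"
      proof (rule sum_pos2[OF fin e0(1)])
      show "0 < sqrt (l e0) * (e0 \<bullet> x)\<^sup>2" using lpos[OF e0(1)] e0(2) by simp
      show "\<And>i. i \<in> E \<Longrightarrow> 0 \<le> sqrt (l i) * (i \<bullet> x)\<^sup>2"
        using lpos by (simp add: less_imp_le)
    qed
    finally show "0 < x \<bullet> (S *v x)" .
  qed
  have SS: "S ** S = A"
  proof -
    have "(S ** S) *v x = A *v x" for x
    proof -
      have "(S ** S) *v x = S *v (S *v x)" by (simp add: matrix_vector_mul_assoc)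
      also have "\<dots> = (\<Sum>e\<in>E. (sqrt (l e) * (sqrt (l e) * (e \<bullet> x))) *\<^sub>R e)"
        unfolding Sx[of "S *v x"] unfolding Sx by (simp add: coef)
      also have "\<dots> = A *v x" unfolding Ax using lpos
        by (intro sum.cong) (simp_all add: mult.assoc[symmetric] less_imp_le)
      finally show ?thesis .
    qed
    then show ?thesis by (simp add: matrix_eq)
  qed
  have uniq: "S' = S" if pS': "pd_mat S'" and SS': "S' ** S' = A" for S'
  proof -
    have S'e: "S' *v e = sqrt (l e) *\<^sub>R e" if "e \<in> E" for e
    proof (rule ccontr)
      define r where "r = sqrt (l e)"
      have r: "r > 0" "r * r = l e" using lpos[OF that] unfolding r_def by (auto simp: real_sqrt_mult[symmetric])
      define y where "y = S' *v e - r *\<^sub>R e"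
      assume "S' *v e \<noteq> sqrt (l e) *\<^sub>R e"
      then have "y \<noteq> 0" unfolding y_def r_def by simp
      have "S' *v (S' *v e) = A *v e" using SS' by (simp add: matrix_vector_mul_assoc)
      then have "S' *v y + r *\<^sub>R y = 0" unfolding y_def using r eig'[OF that]
        by (simp add: matrix_vector_mult_diff_distrib matrix_vector_mult_scaleR algebra_simps)
      then have "S' *v y = - (r *\<^sub>R y)" by (simp add: eq_neg_iff_add_eq_0)
      then have "y \<bullet> (S' *v y) = - r * (y \<bullet> y)" by simp
      moreover have "y \<bullet> (S' *v y) > 0" using pS' \<open>y \<noteq> 0\<close> unfolding pd_mat_def by auto
      moreover have "y \<bullet> y \<ge> 0" by simp
      moreover have "r * (y \<bullet> y) \<ge> 0" using r by simp
      ultimately show False by linarith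
    qed
    have "S' *v x = S *v x" for x
    proof -
      have "S' *v x = S' *v (\<Sum>e\<in>E. (e \<bullet> x) *\<^sub>R e)" using exp[of x] by simp
      also have "\<dots> = S *v x" unfolding mat_mult_sum Sx
        by (intro sum.cong) (simp_all add: matrix_vector_mult_scaleR S'e)
      finally show ?thesis .
    qed
    then show ?thesis by (simp add: matrix_eq)
  qed
  show ?thesis using tS pS SS uniq by blast
qed

lemma mat_sqrt_props: fixes A :: "real^'n^'n" assumes "transpose A = A" "pd_mat A"
  shows "transpose (mat_sqrt A) = mat_sqrt A \<and> pd_mat (mat_sqrt A) \<and> mat_sqrt A ** mat_sqrt A = A"
  unfolding mat_sqrt_def using theI'[OF sqrt_exists_unique[OF assms]] .

lemma mat_sqrt_unique: fixes A :: "real^'n^'n"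
  assumes "transpose A = A" "pd_mat A" "transpose S = S" "pd_mat S" "S ** S = A"
  shows "mat_sqrt A = S"
  unfolding mat_sqrt_def using the1_equality[OF sqrt_exists_unique[OF assms(1,2)]] assms(3-5) by blast

lemma inv_unique: fixes M :: "real^'n^'n" assumes "invertible M" "M ** B = mat 1"
  shows "matrix_inv M = B"
proof -
  have "matrix_inv M = matrix_inv M ** (M ** B)" using assms(2) by simp
  also have "\<dots> = B" using inv_props[OF assms(1)] by (simp add: matrix_mul_assoc)
  finally show ?thesis .
qed

lemma RDR: fixes A :: "real^'n^'n" assumes "transpose A = A" "pd_mat A"
  shows "matrix_inv (mat_sqrt A) ** A ** matrix_inv (mat_sqrt A) = mat 1"
proof -
  let ?S = "mat_sqrt A"
  have p: "transpose ?S = ?S" "pd_mat ?S" "?S ** ?S = A" using mat_sqrt_props[OF assms] by auto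
  have i: "?S ** matrix_inv ?S = mat 1" "matrix_inv ?S ** ?S = mat 1"
    using inv_props[OF pd_invertible[OF p(2)]] by auto
  have "matrix_inv ?S ** A ** matrix_inv ?S = (matrix_inv ?S ** ?S) ** (?S ** matrix_inv ?S)"
    by (subst p(3)[symmetric]) (simp add: matrix_mul_assoc)
  then show ?thesis using i by simp
qed

lemma pd_scale: "c > 0 \<Longrightarrow> pd_mat D \<Longrightarrow> pd_mat (c *\<^sub>R D)"
  unfolding pd_mat_def by (simp add: scaleR_matrix_vector_assoc[symmetric])

lemma scale_canon: fixes D X :: "real^'n^'n" assumes c: "c > 0" and D: "transpose D = D" "pd_mat D"
  shows "matrix_inv (mat_sqrt (c *\<^sub>R D)) ** (c *\<^sub>R X) ** matrix_inv (mat_sqrt (c *\<^sub>R D))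
       = matrix_inv (mat_sqrt D) ** X ** matrix_inv (mat_sqrt D)"
proof -
  let ?S = "mat_sqrt D" let ?r = "sqrt c"
  have r: "?r > 0" "?r * ?r = c" using c by auto
  have p: "transpose ?S = ?S" "pd_mat ?S" "?S ** ?S = D" using mat_sqrt_props[OF D] by auto
  have i: "?S ** matrix_inv ?S = mat 1" "matrix_inv ?S ** ?S = mat 1"
    using inv_props[OF pd_invertible[OF p(2)]] by auto
  have sq: "mat_sqrt (c *\<^sub>R D) = ?r *\<^sub>R ?S"
  proof (rule mat_sqrt_unique)
    show "transpose (c *\<^sub>R D) = c *\<^sub>R D" using D by (simp add: transpose_scalar)
    show "pd_mat (c *\<^sub>R D)" using pd_scale[OF c D(2)] .
    show "transpose (?r *\<^sub>R ?S) = ?r *\<^sub>R ?S" using p by (simp add: transpose_scalar)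
    show "pd_mat (?r *\<^sub>R ?S)" using pd_scale[OF r(1) p(2)] .
    show "(?r *\<^sub>R ?S) ** (?r *\<^sub>R ?S) = c *\<^sub>R D"
      using p(3) r(2) by (simp add: matrix_scalar_ac scalar_matrix_assoc[symmetric])
  qed
  have inv: "matrix_inv (?r *\<^sub>R ?S) = (1/?r) *\<^sub>R matrix_inv ?S"
  proof (rule inv_unique)
    show "invertible (?r *\<^sub>R ?S)" using pd_invertible pd_scale[OF r(1) p(2)] by blast
    show "(?r *\<^sub>R ?S) ** ((1/?r) *\<^sub>R matrix_inv ?S) = mat 1"
      using i r(1) by (simp add: matrix_scalar_ac scalar_matrix_assoc[symmetric])
  qed
  show ?thesis unfolding sq inv using r
    by (simp add: matrix_scalar_ac scalar_matrix_assoc[symmetric])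
qed

lemma mm_entries: "matrix_measure a b \<mu> \<Longrightarrow> signed_borel_measure a b (\<lambda>B. \<mu> B $ i $ j)"
  unfolding matrix_measure_def by auto

lemma mm_conc: assumes "matrix_measure a b \<mu>" "B \<in> sets borel" shows "\<mu> B = \<mu> (B \<inter> {a..b})"
proof -
  have "\<mu> B $ i $ j = \<mu> (B \<inter> {a..b}) $ i $ j" for i j
  proof -
    obtain M1 M2 where "signed_rep a b (\<lambda>B. \<mu> B $ i $ j) M1 M2"
      using mm_entries[OF assms(1)] unfolding signed_borel_measure_def by blast
    from rep_conc[OF this assms(2)] show ?thesis .
  qed
  then show ?thesis by (simp add: vec_eq_iff)
qed

lemma mm_sym_borel: assumes "matrix_measure a b \<mu>" "B \<in> sets borel"
  shows "\<mu> B $ i $ j = \<mu> B $ j $ i"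
proof -
  have tr: "transpose (\<mu> (B \<inter> {a..b})) = \<mu> (B \<inter> {a..b})"
    using assms unfolding matrix_measure_def by auto
  have "\<mu> (B \<inter> {a..b}) $ i $ j = \<mu> (B \<inter> {a..b}) $ j $ i"
    using arg_cong[where f="\<lambda>M. M $ i $ j", OF tr] by (simp add: transpose_def)
  then show ?thesis using mm_conc[OF assms] by simp
qed

lemma moment_sym: assumes "matrix_measure a b \<mu>"
  shows "transpose (mat_moment a b \<mu> k) = mat_moment a b \<mu> k"
  unfolding mat_moment_def transpose_def
  by (simp add: vec_eq_iff, intro allI signed_integral_cong) (use mm_sym_borel[OF assms] in auto)

lemma mm_push:
  assumes mm: "matrix_measure a b \<mu>" and phi: "\<phi> \<in> borel_measurable borel"
    and maps: "\<forall>x\<in>{a..b}. \<phi> x \<in> {a'..b'}"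
  shows "matrix_measure a' b' (\<lambda>B. \<mu> (\<phi> -` B))"
  unfolding matrix_measure_def
proof (intro conjI allI ballI impI)
  fix i j show "signed_borel_measure a' b' (\<lambda>B. \<mu> (\<phi> -` B) $ i $ j)"
    using push_sbm[OF mm_entries[OF mm] phi maps] .
next
  fix B :: "real set" assume B: "B \<in> sets borel" "B \<subseteq> {a'..b'}"
  have pB: "\<phi> -` B \<in> sets borel" using measurable_sets[OF phi B(1)] by simp
  have e: "\<mu> (\<phi> -` B) = \<mu> (\<phi> -` B \<inter> {a..b})" using mm_conc[OF mm pB] .
  have "\<phi> -` B \<inter> {a..b} \<in> sets borel" using pB by auto
  then show "transpose (\<mu> (\<phi> -` B)) = \<mu> (\<phi> -` B)" "psd_mat (\<mu> (\<phi> -` B))"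
    using mm unfolding e matrix_measure_def by auto
next
  have pB: "\<phi> -` {a'..b'} \<in> sets borel" using measurable_sets[OF phi, of "{a'..b'}"] by simp
  have "\<phi> -` {a'..b'} \<inter> {a..b} = {a..b}" using maps by auto
  then show "\<mu> (\<phi> -` {a'..b'}) = mat 1" using mm_conc[OF mm pB] mm unfolding matrix_measure_def by simp
qed

lemma moment_push:
  assumes mm: "matrix_measure a b \<mu>" and phi: "\<phi> \<in> borel_measurable borel"
    and maps: "\<forall>x\<in>{a..b}. \<phi> x \<in> {a'..b'}"
  shows "mat_moment a' b' (\<lambda>B. \<mu> (\<phi> -` B)) k = (\<chi> i j. signed_integral a b (\<lambda>B. \<mu> B $ i $ j) (\<lambda>x. (\<phi> x)^k))"
  unfolding mat_moment_def
  by (intro arg_cong[where f=vec_lambda] ext push_integral[OF mm_entries[OF mm] phi maps _ pow_bound]) simp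

lemma affine_binom: "((\<alpha>::real) * x + \<beta>) ^ k = (\<Sum>j\<le>k. (of_nat (k choose j) * \<alpha>^j * \<beta>^(k-j)) * x ^ j)"
  unfolding binomial_ring by (intro sum.cong refl) (simp add: power_mult_distrib mult_ac)

lemma moment_affine:
  assumes mm: "matrix_measure a b \<mu>" and maps: "\<forall>x\<in>{a..b}. \<alpha>*x+\<beta> \<in> {a'..b'}"
  shows "mat_moment a' b' (\<lambda>B. \<mu> ((\<lambda>x. \<alpha>*x+\<beta>) -` B)) k
      = (\<Sum>j\<le>k. (of_nat (k choose j) * \<alpha>^j * \<beta>^(k-j)) *\<^sub>R mat_moment a b \<mu> j)"
proof -
  have phi: "(\<lambda>x. \<alpha>*x+\<beta>) \<in> borel_measurable borel" by simp
  show ?thesis unfolding moment_push[OF mm phi maps] affine_binom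
    by (simp add: vec_eq_iff signed_integral_lin[OF mm_entries[OF mm]] mat_moment_def)
qed

lemma neg_mv: "(- M) *v x = - (M *v (x::real^'n))" for M :: "real^'n^'m"
  by (simp add: matrix_vector_mult_def vec_eq_iff sum_negf)

lemma psd_antisym: fixes M :: "real^'n^'n"
  assumes "transpose M = M" "psd_mat M" "psd_mat (- M)" shows "M = 0"
proof -
  have q: "x \<bullet> (M *v x) = 0" for x
  proof -
    have "0 \<le> x \<bullet> (M *v x)" "0 \<le> x \<bullet> ((- M) *v x)" using assms(2,3) unfolding psd_mat_def by auto
    then show ?thesis by (simp add: neg_mv)
  qed
  have "y \<bullet> (M *v x) = 0" for x y
  proof -
    have "(x + y) \<bullet> (M *v (x + y)) = x \<bullet> (M *v x) + y \<bullet> (M *v y) + x \<bullet> (M *v y) + y \<bullet> (M *v x)"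
      by (simp add: matrix_vector_right_distrib inner_add_left inner_add_right)
    moreover have "x \<bullet> (M *v y) = y \<bullet> (M *v x)"
      using sym_inner[OF assms(1), of x y] by (simp add: inner_commute)
    ultimately show ?thesis using q by simp
  qed
  then have "M *v x = 0" for x using inner_eq_zero_iff by blast
  then show ?thesis by (simp add: matrix_eq)
qed

lemma transpose_diff: "transpose (A - B) = transpose A - transpose (B::real^'n^'n)"
  by (simp add: transpose_def vec_eq_iff)

lemma range_sym: "T \<in> moment_range a b \<mu> k \<Longrightarrow> transpose T = T"
  unfolding moment_range_def using moment_sym by blast

lemma loewner_antisym: fixes A B :: "real^'n^'n"
  assumes "transpose A = A" "transpose B = B" "loewner_le A B" "loewner_le B A" shows "A = B"
proof -
  have "transpose (B - A) = B - A" using assms by (simp add: transpose_diff)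
  moreover have "- (B - A) = A - B" by simp
  ultimately have "B - A = 0" using psd_antisym assms(3,4) unfolding loewner_le_def by metis
  then show ?thesis by simp
qed

lemma upper_eq: assumes "is_upper_moment a b \<mu> k T" shows "upper_moment a b \<mu> k = T"
  unfolding upper_moment_def
proof (rule the_equality)
  show "is_upper_moment a b \<mu> k T" by (rule assms)
  fix T' assume "is_upper_moment a b \<mu> k T'"
  then show "T' = T" using assms unfolding is_upper_moment_def
    by (metis loewner_antisym range_sym)
qed

lemma lower_eq: assumes "is_lower_moment a b \<mu> k T" shows "lower_moment a b \<mu> k = T"
  unfolding lower_moment_def
proof (rule the_equality)
  show "is_lower_moment a b \<mu> k T" by (rule assms)
  fix T' assume "is_lower_moment a b \<mu> k T'"
  then show "T' = T" using assms unfolding is_lower_moment_def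
    by (metis loewner_antisym range_sym)
qed

lemma psd_scale_iff: "c > 0 \<Longrightarrow> psd_mat (c *\<^sub>R M) \<longleftrightarrow> psd_mat M"
  unfolding psd_mat_def by (simp add: scaleR_matrix_vector_assoc[symmetric] zero_le_mult_iff)

lemma pd_scale_iff: "c > 0 \<Longrightarrow> pd_mat (c *\<^sub>R M) \<longleftrightarrow> pd_mat M"
  unfolding pd_mat_def by (simp add: scaleR_matrix_vector_assoc[symmetric] zero_less_mult_iff)

lemma loewner_affine: "c > 0 \<Longrightarrow> loewner_le (c *\<^sub>R A + C) (c *\<^sub>R B + C) \<longleftrightarrow> loewner_le A B"
  unfolding loewner_le_def by (simp add: psd_scale_iff scaleR_diff_right[symmetric])

lemma canon_transfer:
  fixes \<mu> :: "real set \<Rightarrow> real^'n^'n" and \<nu> :: "real set \<Rightarrow> real^'n^'n"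
  assumes R: "moment_range a' b' \<nu> k' = (\<lambda>T. c *\<^sub>R T + C) ` moment_range a b \<mu> k"
    and Tk: "mat_moment a' b' \<nu> k' = c *\<^sub>R mat_moment a b \<mu> k + C" and c: "c > 0"
  shows "canonical_moment a' b' \<nu> k' = canonical_moment a b \<mu> k"
proof -
  let ?f = "\<lambda>T. c *\<^sub>R T + C"
  have up: "is_upper_moment a' b' \<nu> k' (?f T) \<longleftrightarrow> is_upper_moment a b \<mu> k T" for T
  proof -
    have inj: "?f T \<in> ?f ` S \<longleftrightarrow> T \<in> S" for S using c by auto
    show ?thesis unfolding is_upper_moment_def R inj using loewner_affine[OF c] by auto
  qed
  have lo: "is_lower_moment a' b' \<nu> k' (?f T) \<longleftrightarrow> is_lower_moment a b \<mu> k T" for T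
  proof -
    have inj: "?f T \<in> ?f ` S \<longleftrightarrow> T \<in> S" for S using c by auto
    show ?thesis unfolding is_lower_moment_def R inj using loewner_affine[OF c] by auto
  qed
  have exu: "(\<exists>T. is_upper_moment a' b' \<nu> k' T) \<longleftrightarrow> (\<exists>T. is_upper_moment a b \<mu> k T)"
    using up unfolding is_upper_moment_def[of a' b' \<nu>] R by blast
  have exl: "(\<exists>T. is_lower_moment a' b' \<nu> k' T) \<longleftrightarrow> (\<exists>T. is_lower_moment a b \<mu> k T)"
    using lo unfolding is_lower_moment_def[of a' b' \<nu>] R by blast
  show ?thesis
  proof (cases "(\<exists>T. is_upper_moment a b \<mu> k T) \<and> (\<exists>T. is_lower_moment a b \<mu> k T)")
    case False then show ?thesis unfolding canonical_moment_def using exu exl by auto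
  next
    case True
    then obtain U L where U: "is_upper_moment a b \<mu> k U" and L: "is_lower_moment a b \<mu> k L" by blast
    have U': "upper_moment a' b' \<nu> k' = ?f U" "upper_moment a b \<mu> k = U"
      using upper_eq up U by blast+
    have L': "lower_moment a' b' \<nu> k' = ?f L" "lower_moment a b \<mu> k = L"
      using lower_eq lo L by blast+
    have D: "?f U - ?f L = c *\<^sub>R (U - L)" by (simp add: scaleR_diff_right)
    have "transpose U = U" "transpose L = L"
      using U L range_sym unfolding is_upper_moment_def is_lower_moment_def by blast+
    then have sD: "transpose (U - L) = U - L" by (simp add: transpose_diff)
    have X: "mat_moment a' b' \<nu> k' - ?f L = c *\<^sub>R (mat_moment a b \<mu> k - L)"
      unfolding Tk by (simp add: scaleR_diff_right)
    show ?thesis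
      unfolding canonical_moment_def U' L' D X Let_def using exu exl True pd_scale_iff[OF c] scale_canon[OF c sD]
      by auto
  qed
qed

lemma canon_reflect:
  fixes \<mu> :: "real set \<Rightarrow> real^'n^'n"
  assumes R: "moment_range a b \<mu> k = (\<lambda>T. 2 *\<^sub>R mat_moment a b \<mu> k - T) ` moment_range a b \<mu> k"
    and def: "canonical_moment a b \<mu> k \<noteq> None"
  shows "canonical_moment a b \<mu> k = Some ((1/2) *\<^sub>R mat 1)"
proof -
  let ?T = "mat_moment a b \<mu> k"
  have ex: "(\<exists>T. is_upper_moment a b \<mu> k T)" "(\<exists>T. is_lower_moment a b \<mu> k T)"
    and pd: "pd_mat (upper_moment a b \<mu> k - lower_moment a b \<mu> k)"
    using def unfolding canonical_moment_def by (auto split: if_splits)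
  then obtain L where L: "is_lower_moment a b \<mu> k L" by blast
  have "is_upper_moment a b \<mu> k (2 *\<^sub>R ?T - L)"
    unfolding is_upper_moment_def
  proof
    show "2 *\<^sub>R ?T - L \<in> moment_range a b \<mu> k" using L unfolding is_lower_moment_def
      by (subst R) auto
    show "\<forall>T'\<in>moment_range a b \<mu> k. loewner_le T' (2 *\<^sub>R ?T - L)"
    proof
      fix T' assume "T' \<in> moment_range a b \<mu> k"
      then obtain T'' where "T'' \<in> moment_range a b \<mu> k" "T' = 2 *\<^sub>R ?T - T''"
        by (subst (asm) R) auto
      then show "loewner_le T' (2 *\<^sub>R ?T - L)" using L unfolding is_lower_moment_def loewner_le_def
        by auto
    qed
  qed
  then have U: "upper_moment a b \<mu> k = 2 *\<^sub>R ?T - L" by (rule upper_eq)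
  have L': "lower_moment a b \<mu> k = L" using lower_eq[OF L] .
  define D where "D = upper_moment a b \<mu> k - lower_moment a b \<mu> k"
  have "2 *\<^sub>R ?T - L - L = 2 *\<^sub>R (?T - L)" by (simp add: scaleR_diff_right scaleR_2)
  then have TL: "?T - L = (1/2) *\<^sub>R D" unfolding D_def U L' by simp
  have "transpose (2 *\<^sub>R ?T - L) = 2 *\<^sub>R ?T - L" "transpose L = L"
    using L range_sym \<open>is_upper_moment a b \<mu> k (2 *\<^sub>R ?T - L)\<close>
    unfolding is_upper_moment_def is_lower_moment_def by blast+
  then have sD: "transpose D = D"
    unfolding D_def U L' by (simp only: transpose_diff)
  have pD: "pd_mat D" using pd unfolding D_def .
  have "canonical_moment a b \<mu> k = Some (matrix_inv (mat_sqrt D) ** ((1/2) *\<^sub>R D) ** matrix_inv (mat_sqrt D))"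
    unfolding canonical_moment_def Let_def using ex pd TL L' unfolding D_def by simp
  also have "matrix_inv (mat_sqrt D) ** ((1/2) *\<^sub>R D) ** matrix_inv (mat_sqrt D)
     = (1/2) *\<^sub>R (matrix_inv (mat_sqrt D) ** D ** matrix_inv (mat_sqrt D))"
    by (simp add: matrix_scalar_ac scalar_matrix_assoc[symmetric])
  also have "\<dots> = (1/2) *\<^sub>R mat 1" using RDR[OF sD pD] by simp
  finally show ?thesis .
qed

lemma triang:
  fixes X Y P Q :: "nat \<Rightarrow> real^'n^'n"
  assumes P: "\<And>j. P j = (\<Sum>i\<le>j. c j i *\<^sub>R X i)" and Q: "\<And>j. Q j = (\<Sum>i\<le>j. c j i *\<^sub>R Y i)"
    and nz: "\<And>j. c j j \<noteq> 0" and eq: "\<forall>j<n. P j = Q j"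
  shows "\<forall>j<n. X j = Y j"
proof (intro allI impI)
  fix j show "j < n \<Longrightarrow> X j = Y j"
  proof (induction j rule: less_induct)
    case (less j)
    have IH: "\<forall>i<j. X i = Y i" using less by auto
    have "(\<Sum>i<j. c j i *\<^sub>R X i) = (\<Sum>i<j. c j i *\<^sub>R Y i)" using IH by (intro sum.cong) auto
    moreover have "P j = Q j" using eq less by auto
    ultimately have "c j j *\<^sub>R X j = c j j *\<^sub>R Y j"
      unfolding P Q by (simp add: lessThan_Suc_atMost[symmetric])
    then show ?case using nz by simp
  qed
qed

lemma partA:
  fixes \<mu> :: "real set \<Rightarrow> real^'p^'p"
  assumes mm: "matrix_measure 0 1 \<mu>" and ab: "a < b"
  shows "canonical_moment a b (\<lambda>B. \<mu> ((\<lambda>x. (b - a) * x + a) -` B)) n = canonical_moment 0 1 \<mu> n"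
proof -
  define ginv where "ginv y = (1/(b-a)) * y + (-a/(b-a))" for y
  have maps: "\<forall>x\<in>{0..1}. (b - a) * x + a \<in> {a..b}"
  proof
    fix x :: real assume "x \<in> {0..1}"
    then have "0 \<le> (b-a)*x" "(b-a)*x \<le> (b-a)" using ab by (auto simp: mult_left_le)
    then show "(b - a) * x + a \<in> {a..b}" by auto
  qed
  have maps': "\<forall>y\<in>{a..b}. (1/(b-a)) * y + (-a/(b-a)) \<in> {0..1}"
  proof
    fix y :: real assume "y \<in> {a..b}"
    have "(1/(b-a)) * y + (-a/(b-a)) = (y - a) / (b - a)" using ab by (simp add: diff_divide_distrib)
    moreover have "0 \<le> (y-a)/(b-a)" "(y-a)/(b-a) \<le> 1" using \<open>y \<in> {a..b}\<close> ab by (auto simp: divide_le_eq_1)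
    ultimately show "(1/(b-a)) * y + (-a/(b-a)) \<in> {0..1}" by simp
  qed
  define c where "c k j = of_nat (k choose j) * (b-a)^j * a^(k-j)" for k j :: nat
  let ?push = "\<lambda>\<mu>'::real set \<Rightarrow> real^'p^'p. (\<lambda>B. \<mu>' ((\<lambda>x. (b - a) * x + a) -` B))"
  have mom: "mat_moment a b (?push \<mu>') k = (\<Sum>j\<le>k. c k j *\<^sub>R mat_moment 0 1 \<mu>' j)"
    if "matrix_measure 0 1 \<mu>'" for \<mu>' k
    unfolding c_def by (rule moment_affine[OF that maps])
  have cnz: "c k k \<noteq> 0" for k unfolding c_def using ab by simp
  have ckk: "c k k = (b-a)^k" for k unfolding c_def by simp
  define C where "C = (\<Sum>j<n. c n j *\<^sub>R mat_moment 0 1 \<mu> j)"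
  have split: "mat_moment a b (?push \<mu>') n = (b-a)^n *\<^sub>R mat_moment 0 1 \<mu>' n + C"
    if "matrix_measure 0 1 \<mu>'" "\<forall>j<n. mat_moment 0 1 \<mu>' j = mat_moment 0 1 \<mu> j" for \<mu>'
  proof -
    have "mat_moment a b (?push \<mu>') n = (\<Sum>j<Suc n. c n j *\<^sub>R mat_moment 0 1 \<mu>' j)"
      unfolding mom[OF that(1)] lessThan_Suc_atMost ..
    also have "\<dots> = (\<Sum>j<n. c n j *\<^sub>R mat_moment 0 1 \<mu>' j) + c n n *\<^sub>R mat_moment 0 1 \<mu>' n" by simp
    also have "(\<Sum>j<n. c n j *\<^sub>R mat_moment 0 1 \<mu>' j) = C" unfolding C_def using that(2) by (intro sum.cong) auto
    finally show ?thesis by (simp add: ckk)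
  qed
  have mmg: "(\<lambda>x. (b - a) * x + a) \<in> borel_measurable borel" by simp
  have R: "moment_range a b (?push \<mu>) n = (\<lambda>T. (b-a)^n *\<^sub>R T + C) ` moment_range 0 1 \<mu> n"
  proof
    show "(\<lambda>T. (b-a)^n *\<^sub>R T + C) ` moment_range 0 1 \<mu> n \<subseteq> moment_range a b (?push \<mu>) n"
    proof
      fix T' assume "T' \<in> (\<lambda>T. (b-a)^n *\<^sub>R T + C) ` moment_range 0 1 \<mu> n"
      then obtain \<mu>' where \<mu>': "matrix_measure 0 1 \<mu>'" "\<forall>j<n. mat_moment 0 1 \<mu>' j = mat_moment 0 1 \<mu> j"
        and T': "T' = (b-a)^n *\<^sub>R mat_moment 0 1 \<mu>' n + C"
        unfolding moment_range_def by auto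
      show "T' \<in> moment_range a b (?push \<mu>) n" unfolding moment_range_def
      proof (intro CollectI exI conjI allI impI)
        show "matrix_measure a b (?push \<mu>')" by (rule mm_push[OF \<mu>'(1) mmg maps])
        fix j assume "j < n"
        then show "mat_moment a b (?push \<mu>') j = mat_moment a b (?push \<mu>) j"
          unfolding mom[OF \<mu>'(1)] mom[OF mm] using \<mu>'(2) by (intro sum.cong) auto
      next
        show "mat_moment a b (?push \<mu>') n = T'" using split[OF \<mu>'] T' by simp
      qed
    qed
  next
    show "moment_range a b (?push \<mu>) n \<subseteq> (\<lambda>T. (b-a)^n *\<^sub>R T + C) ` moment_range 0 1 \<mu> n"
    proof
      fix T' assume "T' \<in> moment_range a b (?push \<mu>) n"
      then obtain \<nu> where \<nu>: "matrix_measure a b \<nu>" "\<forall>j<n. mat_moment a b \<nu> j = mat_moment a b (?push \<mu>) j"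
        and T': "T' = mat_moment a b \<nu> n"
        unfolding moment_range_def by auto
      define \<mu>' where "\<mu>' = (\<lambda>B. \<nu> ((\<lambda>y. (1/(b-a)) * y + (-a/(b-a))) -` B))"
      have mm': "matrix_measure 0 1 \<mu>'" unfolding \<mu>'_def by (rule mm_push[OF \<nu>(1) _ maps']) simp
      have bk: "?push \<mu>' = \<nu>"
      proof -
        have gi: "(b - a) * ((1/(b-a)) * y + (-a/(b-a))) + a = y" for y
          using ab by (simp add: right_diff_distrib)
        have "(\<lambda>y. (1/(b-a)) * y + (-a/(b-a))) -` ((\<lambda>x. (b - a) * x + a) -` B) = B" for B
          using gi by auto
        then show ?thesis unfolding \<mu>'_def by simp
      qed
      have eqj: "\<forall>j<n. mat_moment 0 1 \<mu>' j = mat_moment 0 1 \<mu> j"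
        by (rule triang[of "\<lambda>j. mat_moment a b \<nu> j" c _ "\<lambda>j. mat_moment a b (?push \<mu>) j"])
           (use mom[OF mm'] mom[OF mm] bk cnz \<nu>(2) in auto)
      have "T' = (b-a)^n *\<^sub>R mat_moment 0 1 \<mu>' n + C" using split[OF mm' eqj] bk T' by simp
      moreover have "mat_moment 0 1 \<mu>' n \<in> moment_range 0 1 \<mu> n"
        unfolding moment_range_def using mm' eqj by auto
      ultimately show "T' \<in> (\<lambda>T. (b-a)^n *\<^sub>R T + C) ` moment_range 0 1 \<mu> n" by blast
    qed
  qed
  have Tk: "mat_moment a b (?push \<mu>) n = (b-a)^n *\<^sub>R mat_moment 0 1 \<mu> n + C"
    using split[OF mm] by simp
  show ?thesis by (rule canon_transfer[OF R Tk]) (use ab in simp)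
qed

lemma partB:
  fixes \<mu> :: "real set \<Rightarrow> real^'p^'p"
  assumes ab: "a < b" and mm: "matrix_measure a b \<mu>"
    and sym: "\<forall>B \<in> sets borel. \<mu> B = \<mu> ((\<lambda>x. a + b - x) -` B)" and odd: "odd k"
    and def: "canonical_moment a b \<mu> k \<noteq> None"
  shows "canonical_moment a b \<mu> k = Some ((1/2) *\<^sub>R mat 1)"
proof -
  have rho: "(\<lambda>x::real. a + b - x) = (\<lambda>x. (-1) * x + (a+b))" by auto
  have maps: "\<forall>x\<in>{a..b}. (-1) * x + (a+b) \<in> {a..b}" by auto
  have mmr: "(\<lambda>x. (-1) * x + (a+b)) \<in> borel_measurable borel" by simp
  define d where "d k j = of_nat (k choose j) * (-1)^j * (a+b)^(k-j)" for k j :: nat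
  let ?push = "\<lambda>\<mu>'::real set \<Rightarrow> real^'p^'p. (\<lambda>B. \<mu>' ((\<lambda>x. (-1) * x + (a+b)) -` B))"
  have mom: "mat_moment a b (?push \<mu>') j = (\<Sum>i\<le>j. d j i *\<^sub>R mat_moment a b \<mu>' i)"
    if "matrix_measure a b \<mu>'" for \<mu>' j
    unfolding d_def by (rule moment_affine[OF that maps])
  have self: "mat_moment a b \<mu> j = mat_moment a b (?push \<mu>) j" for j
    unfolding mat_moment_def using sym unfolding rho
    by (simp add: vec_eq_iff, intro allI signed_integral_cong) auto
  have dkk: "d k k = -1" unfolding d_def using odd by simp
  define T where "T = mat_moment a b \<mu> k"
  define S where "S = (\<Sum>j<k. d k j *\<^sub>R mat_moment a b \<mu> j)"
  have splitk: "mat_moment a b (?push \<mu>') k = - mat_moment a b \<mu>' k + (\<Sum>j<k. d k j *\<^sub>R mat_moment a b \<mu>' j)"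
    if "matrix_measure a b \<mu>'" for \<mu>'
  proof -
    have "mat_moment a b (?push \<mu>') k = (\<Sum>j<Suc k. d k j *\<^sub>R mat_moment a b \<mu>' j)"
      unfolding mom[OF that] lessThan_Suc_atMost ..
    then show ?thesis by (simp add: dkk)
  qed
  have S2: "S = 2 *\<^sub>R T"
  proof -
    have "T = - T + S" using self[of k] splitk[OF mm] unfolding T_def S_def by simp
    then show ?thesis by (simp add: scaleR_2 algebra_simps)
  qed
  have cl: "2 *\<^sub>R T - T' \<in> moment_range a b \<mu> k" if T'in: "T' \<in> moment_range a b \<mu> k" for T'
  proof -
    obtain \<mu>' where \<mu>': "matrix_measure a b \<mu>'" "\<forall>j<k. mat_moment a b \<mu>' j = mat_moment a b \<mu> j"
      and T': "T' = mat_moment a b \<mu>' k"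
      using T'in unfolding moment_range_def by auto
    show ?thesis unfolding moment_range_def
    proof (intro CollectI exI conjI allI impI)
      show "matrix_measure a b (?push \<mu>')" by (rule mm_push[OF \<mu>'(1) mmr maps])
      fix j assume "j < k"
      then have "mat_moment a b (?push \<mu>') j = mat_moment a b (?push \<mu>) j"
        unfolding mom[OF \<mu>'(1)] mom[OF mm] using \<mu>'(2) by (intro sum.cong) auto
      then show "mat_moment a b (?push \<mu>') j = mat_moment a b \<mu> j" using self by simp
    next
      have "(\<Sum>j<k. d k j *\<^sub>R mat_moment a b \<mu>' j) = S" unfolding S_def using \<mu>'(2) by (intro sum.cong) auto
      then show "mat_moment a b (?push \<mu>') k = 2 *\<^sub>R T - T'" using splitk[OF \<mu>'(1)] S2 T' by simp
    qed
  qed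
  have R: "moment_range a b \<mu> k = (\<lambda>T'. 2 *\<^sub>R mat_moment a b \<mu> k - T') ` moment_range a b \<mu> k"
  proof
    show "moment_range a b \<mu> k \<subseteq> (\<lambda>T'. 2 *\<^sub>R mat_moment a b \<mu> k - T') ` moment_range a b \<mu> k"
    proof
      fix T' assume "T' \<in> moment_range a b \<mu> k"
      then have "2 *\<^sub>R T - T' \<in> moment_range a b \<mu> k" by (rule cl)
      moreover have "T' = 2 *\<^sub>R T - (2 *\<^sub>R T - T')" by simp
      ultimately show "T' \<in> (\<lambda>T'. 2 *\<^sub>R mat_moment a b \<mu> k - T') ` moment_range a b \<mu> k"
        unfolding T_def by blast
    qed
    show "(\<lambda>T'. 2 *\<^sub>R mat_moment a b \<mu> k - T') ` moment_range a b \<mu> k \<subseteq> moment_range a b \<mu> k"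
      using cl unfolding T_def by auto
  qed
  show ?thesis by (rule canon_reflect[OF R def])
qed

lemma avg_rep:
  assumes r1: "signed_rep a b s1 M1 M2" and r2: "signed_rep a b s2 N1 N2"
  shows "signed_rep a b (\<lambda>B. (s1 B + s2 B) / 2) (avg M1 N1) (avg M2 N2)"
proof -
  have s: "sets M1 = sets borel" "sets M2 = sets borel" "sets N1 = sets borel" "sets N2 = sets borel"
    "finite_measure M1" "finite_measure M2" "finite_measure N1" "finite_measure N2"
    "emeasure M1 (- {a..b}) = 0" "emeasure M2 (- {a..b}) = 0" "emeasure N1 (- {a..b}) = 0" "emeasure N2 (- {a..b}) = 0"
    "\<forall>B\<in>sets borel. s1 B = measure M1 B - measure M2 B" "\<forall>B\<in>sets borel. s2 B = measure N1 B - measure N2 B"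
    using r1 r2 unfolding signed_rep_def by auto
  show ?thesis unfolding signed_rep_def
  proof (intro conjI ballI)
    show "sets (avg M1 N1) = sets borel" "sets (avg M2 N2) = sets borel" by simp_all
    show "finite_measure (avg M1 N1)" "finite_measure (avg M2 N2)" using finite_avg s by auto
    show "emeasure (avg M1 N1) (- {a..b}) = 0" "emeasure (avg M2 N2) (- {a..b}) = 0"
      using emeasure_avg[of M1 N1 "- {a..b}"] emeasure_avg[of M2 N2 "- {a..b}"] s by auto
    fix B :: "real set" assume B: "B \<in> sets borel"
    show "(s1 B + s2 B) / 2 = measure (avg M1 N1) B - measure (avg M2 N2) B"
      using measure_avg[of M1 N1 B] measure_avg[of M2 N2 B] s B by (simp add: field_simps)
  qed
qed

lemma avg_integral:
  assumes r1: "signed_borel_measure a b s1" and r2: "signed_borel_measure a b s2"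
    and f: "f \<in> borel_measurable borel" "\<forall>x\<in>{a..b}. \<bar>f x\<bar> \<le> C"
  shows "signed_integral a b (\<lambda>B. (s1 B + s2 B) / 2) f = (signed_integral a b s1 f + signed_integral a b s2 f) / 2"
proof -
  obtain M1 M2 where r1: "signed_rep a b s1 M1 M2" using r1 unfolding signed_borel_measure_def by blast
  obtain N1 N2 where r2: "signed_rep a b s2 N1 N2" using r2 unfolding signed_borel_measure_def by blast
  have rr: "signed_rep a b (\<lambda>B. (s1 B + s2 B) / 2) (avg M1 N1) (avg M2 N2)" by (rule avg_rep[OF r1 r2])
  have I: "integrable M f" if "sets M = sets borel" "finite_measure M" "emeasure M (- {a..b}) = 0" for M
    using integ_conc[OF that f] .
  have s: "sets M1 = sets borel" "sets M2 = sets borel" "sets N1 = sets borel" "sets N2 = sets borel"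
    and i: "integrable M1 f" "integrable M2 f" "integrable N1 f" "integrable N2 f"
    "integrable (avg M1 N1) f" "integrable (avg M2 N2) f"
    using r1 r2 rr I unfolding signed_rep_def by auto
  show ?thesis
    unfolding signed_integral_rep[OF rr f] signed_integral_rep[OF r1 f] signed_integral_rep[OF r2 f]
      integral_avg[OF s(1,3) f(1) i(1,3,5)] integral_avg[OF s(2,4) f(1) i(2,4,6)]
    by (simp add: field_simps)
qed

lemma signed_integral_neg:
  assumes r: "signed_borel_measure a b s" and f: "f \<in> borel_measurable borel" "\<forall>x\<in>{a..b}. \<bar>f x\<bar> \<le> C"
  shows "signed_integral a b s (\<lambda>x. - f x) = - signed_integral a b s f"
proof -
  obtain M1 M2 where r: "signed_rep a b s M1 M2" using r unfolding signed_borel_measure_def by blast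
  have f': "(\<lambda>x. - f x) \<in> borel_measurable borel" "\<forall>x\<in>{a..b}. \<bar>- f x\<bar> \<le> C" using f by auto
  show ?thesis unfolding signed_integral_rep[OF r f] signed_integral_rep[OF r f'] by simp
qed

lemma rep_uniq:
  assumes r: "signed_rep a b s M1 M2" and r': "signed_rep a b s' N1 N2"
    and eq: "\<And>t. s {..t} = s' {..t}"
  shows "\<forall>B\<in>sets borel. s B = s' B"
proof
  fix B :: "real set" assume B: "B \<in> sets borel"
  have s: "sets M1 = sets borel" "sets M2 = sets borel" "sets N1 = sets borel" "sets N2 = sets borel"
    "finite_measure M1" "finite_measure M2" "finite_measure N1" "finite_measure N2"
    "\<forall>B\<in>sets borel. s B = measure M1 B - measure M2 B" "\<forall>B\<in>sets borel. s' B = measure N1 B - measure N2 B"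
    using r r' unfolding signed_rep_def by auto
  have G: "sets (borel::real measure) = sigma_sets UNIV (range (\<lambda>a::real. {..a}))"
    by (subst borel_eq_atMost) (simp add: sets_measure_of)
  have ISt: "Int_stable (range (\<lambda>a::real. {..a}))"
    unfolding Int_stable_def by (auto intro: exI[of _ "min _ _"])
  have sU: "s UNIV = s' UNIV"
  proof -
    have "s UNIV = s {..b}" using rep_conc[OF r, of UNIV] rep_conc[OF r, of "{..b}"] by auto
    moreover have "s' UNIV = s' {..b}" using rep_conc[OF r', of UNIV] rep_conc[OF r', of "{..b}"] by auto
    ultimately show ?thesis using eq by simp
  qed
  have compl: "\<And>A. A \<in> sets borel \<Longrightarrow> s (UNIV - A) = s UNIV - s A" "\<And>A. A \<in> sets borel \<Longrightarrow> s' (UNIV - A) = s' UNIV - s' A"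
  proof -
    fix A :: "real set" assume A: "A \<in> sets borel"
    have c: "measure M (UNIV - A) = measure M UNIV - measure M A" if "sets M = sets borel" "finite_measure M" for M
      using finite_measure.finite_measure_compl[OF that(2), of A] A that(1) space_borel_eq[OF that(1)] by simp
    show "s (UNIV - A) = s UNIV - s A" using s A c[of M1] c[of M2] by auto
    show "s' (UNIV - A) = s' UNIV - s' A" using s A c[of N1] c[of N2] by auto
  qed
  have sums: "(\<lambda>i. t (A i)) sums t (\<Union>i. A i)"
    if "\<forall>B\<in>sets borel. t B = measure P1 B - measure P2 B" "sets P1 = sets borel" "sets P2 = sets borel"
       "finite_measure P1" "finite_measure P2" "range A \<subseteq> sets borel" "disjoint_family A" for t P1 P2 and A :: "nat \<Rightarrow> real set"
  proof -
    have "(\<lambda>i. measure P1 (A i)) sums measure P1 (\<Union>i. A i)"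
      using finite_measure.finite_measure_UNION[OF that(4)] that by auto
    moreover have "(\<lambda>i. measure P2 (A i)) sums measure P2 (\<Union>i. A i)"
      using finite_measure.finite_measure_UNION[OF that(5)] that by auto
    ultimately have "(\<lambda>i. measure P1 (A i) - measure P2 (A i)) sums (measure P1 (\<Union>i. A i) - measure P2 (\<Union>i. A i))"
      by (rule sums_diff)
    moreover have "(\<Union>i. A i) \<in> sets borel" using that(6) by auto
    ultimately show ?thesis using that(1,6) by auto
  qed
  have Bsig: "B \<in> sigma_sets UNIV (range (\<lambda>a::real. {..a}))" using B G by simp
  show "s B = s' B"
  proof (rule sigma_sets_induct_disjoint[OF ISt _ Bsig, where P="\<lambda>A. s A = s' A"])
    show "range (\<lambda>a. {..a}) \<subseteq> Pow UNIV" by simp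
    show "\<And>A. A \<in> range (\<lambda>a. {..a}) \<Longrightarrow> s A = s' A" using eq by auto
    show "s {} = s' {}" using s by simp
    show "\<And>A. A \<in> sigma_sets UNIV (range (\<lambda>a::real. {..a})) \<Longrightarrow> s A = s' A \<Longrightarrow> s (UNIV - A) = s' (UNIV - A)"
    proof -
      fix A assume "A \<in> sigma_sets UNIV (range (\<lambda>a::real. {..a}))" "s A = s' A"
      then have "A \<in> sets borel" using G by simp
      then show "s (UNIV - A) = s' (UNIV - A)" using compl \<open>s A = s' A\<close> sU by simp
    qed
    show "\<And>A::nat \<Rightarrow> real set. disjoint_family A \<Longrightarrow> range A \<subseteq> sigma_sets UNIV (range (\<lambda>a::real. {..a})) \<Longrightarrow> (\<And>i. s (A i) = s' (A i)) \<Longrightarrow> s (\<Union>i. A i) = s' (\<Union>i. A i)"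
    proof -
      fix A :: "nat \<Rightarrow> real set"
      assume A: "disjoint_family A" "range A \<subseteq> sigma_sets UNIV (range (\<lambda>a::real. {..a}))" "\<And>i. s (A i) = s' (A i)"
      then have "range A \<subseteq> sets borel" using G by simp
      then have "(\<lambda>i. s (A i)) sums s (\<Union>i. A i)" "(\<lambda>i. s' (A i)) sums s' (\<Union>i. A i)"
        using sums[of s M1 M2 A] sums[of s' N1 N2 A] s A(1) by auto
      then show "s (\<Union>i. A i) = s' (\<Union>i. A i)" using A(3) sums_unique2 by simp
    qed
  qed
qed

lemma mm_uniq:
  assumes "matrix_measure a b \<nu>" "matrix_measure a b \<nu>'" "\<And>t. \<nu> {..t} = \<nu>' {..t}"
  shows "\<forall>B\<in>sets borel. \<nu> B = \<nu>' B"
proof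
  fix B :: "real set" assume B: "B \<in> sets borel"
  have "\<nu> B $ i $ j = \<nu>' B $ i $ j" for i j
  proof -
    obtain M1 M2 where r: "signed_rep a b (\<lambda>B. \<nu> B $ i $ j) M1 M2"
      using mm_entries[OF assms(1)] unfolding signed_borel_measure_def by blast
    obtain N1 N2 where r': "signed_rep a b (\<lambda>B. \<nu>' B $ i $ j) N1 N2"
      using mm_entries[OF assms(2)] unfolding signed_borel_measure_def by blast
    show ?thesis using rep_uniq[OF r r'] assms(3) B by auto
  qed
  then show "\<nu> B = \<nu>' B" by (simp add: vec_eq_iff)
qed

lemma sq_maps: "\<forall>x\<in>{-1..1::real}. x^2 \<in> {0..1}"
  by (auto simp: abs_square_le_1)

lemma sq_mm: assumes "matrix_measure (-1) 1 \<sigma>'" shows "matrix_measure 0 1 (\<lambda>B. \<sigma>' ((\<lambda>x. x^2) -` B))"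
  by (rule mm_push[OF assms _ sq_maps]) simp

lemma sqrt_ge_m1: "0 \<le> x \<Longrightarrow> -1 \<le> sqrt (x::real)"
  using real_sqrt_ge_zero[of x] by linarith

lemma sq_mom: assumes "matrix_measure (-1) 1 \<sigma>'"
  shows "mat_moment 0 1 (\<lambda>B. \<sigma>' ((\<lambda>x. x^2) -` B)) j = mat_moment (-1) 1 \<sigma>' (2*j)"
proof -
  have m: "(\<lambda>x::real. x^2) \<in> borel_measurable borel" by simp
  have "mat_moment 0 1 (\<lambda>B. \<sigma>' ((\<lambda>x. x^2) -` B)) j = (\<chi> i k. signed_integral (-1) 1 (\<lambda>B. \<sigma>' B $ i $ k) (\<lambda>x. (x^2)^j))"
    by (rule moment_push[OF assms m sq_maps])
  also have "\<dots> = mat_moment (-1) 1 \<sigma>' (2*j)" unfolding mat_moment_def by (simp add: power_mult)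
  finally show ?thesis .
qed

definition symz :: "(real set \<Rightarrow> real^'p^'p) \<Rightarrow> real set \<Rightarrow> real^'p^'p" where
  "symz \<mu>' B = (1/2) *\<^sub>R (\<mu>' (sqrt -` B) + \<mu>' ((\<lambda>y. - sqrt y) -` B))"

lemma symz_entry: "(\<lambda>B. symz \<mu>' B $ i $ j) = (\<lambda>B. (\<mu>' (sqrt -` B) $ i $ j + \<mu>' ((\<lambda>y. - sqrt y) -` B) $ i $ j) / 2)"
  by (simp add: symz_def)

lemma rt_maps: "\<forall>y\<in>{0..1}. sqrt y \<in> {-1..1::real}" "\<forall>y\<in>{0..1}. - sqrt y \<in> {-1..1::real}"
  by (auto simp: sqrt_ge_m1)

lemma rt_meas: "sqrt \<in> borel_measurable borel" "(\<lambda>y. - sqrt y) \<in> borel_measurable borel" by simp_all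

lemma psd_add: "psd_mat A \<Longrightarrow> psd_mat B \<Longrightarrow> psd_mat (A + B)"
  unfolding psd_mat_def by (simp add: matrix_vector_mult_add_rdistrib inner_add_right add_nonneg_nonneg)

lemma psd_scale: "0 \<le> c \<Longrightarrow> psd_mat A \<Longrightarrow> psd_mat (c *\<^sub>R A)"
  unfolding psd_mat_def by (simp add: scaleR_matrix_vector_assoc[symmetric])

lemma transpose_add': "transpose (A + B) = transpose A + transpose (B::real^'n^'n)"
  by (simp add: transpose_def vec_eq_iff)

lemma symz_mm: assumes mm: "matrix_measure 0 1 \<mu>'" shows "matrix_measure (-1) 1 (symz \<mu>')"
  unfolding matrix_measure_def
proof (intro conjI allI ballI impI)
  fix i j
  obtain M1 M2 where r: "signed_rep 0 1 (\<lambda>B. \<mu>' B $ i $ j) M1 M2"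
    using mm_entries[OF mm] unfolding signed_borel_measure_def by blast
  have r1: "signed_rep (-1) 1 (\<lambda>B. \<mu>' (sqrt -` B) $ i $ j) (distr M1 borel sqrt) (distr M2 borel sqrt)"
    using push_rep[OF r rt_meas(1) rt_maps(1)] .
  have r2: "signed_rep (-1) 1 (\<lambda>B. \<mu>' ((\<lambda>y. - sqrt y) -` B) $ i $ j) (distr M1 borel (\<lambda>y. - sqrt y)) (distr M2 borel (\<lambda>y. - sqrt y))"
    using push_rep[OF r rt_meas(2) rt_maps(2)] .
  from avg_rep[OF r1 r2] show "signed_borel_measure (-1) 1 (\<lambda>B. symz \<mu>' B $ i $ j)"
    unfolding signed_borel_measure_def symz_entry by blast
next
  fix B :: "real set" assume B: "B \<in> sets borel" "B \<subseteq> {-1..1}"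
  have p1: "sqrt -` B \<in> sets borel" using measurable_sets[OF rt_meas(1) B(1)] by simp
  have p2: "(\<lambda>y. - sqrt y) -` B \<in> sets borel" using measurable_sets[OF rt_meas(2) B(1)] by simp
  have e: "symz \<mu>' B = (1/2) *\<^sub>R (\<mu>' (sqrt -` B \<inter> {0..1}) + \<mu>' ((\<lambda>y. - sqrt y) -` B \<inter> {0..1}))"
    unfolding symz_def using mm_conc[OF mm p1] mm_conc[OF mm p2] by simp
  have q1: "transpose (\<mu>' (sqrt -` B \<inter> {0..1})) = \<mu>' (sqrt -` B \<inter> {0..1})" "psd_mat (\<mu>' (sqrt -` B \<inter> {0..1}))"
    using mm p1 unfolding matrix_measure_def by auto
  have q2: "transpose (\<mu>' ((\<lambda>y. - sqrt y) -` B \<inter> {0..1})) = \<mu>' ((\<lambda>y. - sqrt y) -` B \<inter> {0..1})"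
    "psd_mat (\<mu>' ((\<lambda>y. - sqrt y) -` B \<inter> {0..1}))"
    using mm p2 unfolding matrix_measure_def by auto
  show "transpose (symz \<mu>' B) = symz \<mu>' B" unfolding e using q1 q2 by (simp add: transpose_scalar transpose_add')
  show "psd_mat (symz \<mu>' B)" unfolding e using q1 q2 by (intro psd_scale psd_add) auto
next
  have p1: "sqrt -` {-1..1} \<in> sets borel" using measurable_sets[OF rt_meas(1), of "{-1..1}"] by simp
  have p2: "(\<lambda>y. - sqrt y) -` {-1..1} \<in> sets borel" using measurable_sets[OF rt_meas(2), of "{-1..1}"] by simp
  have i1: "sqrt -` {-1..1} \<inter> {0..1} = {0..1::real}" by (auto simp: sqrt_ge_m1)
  have i2: "(\<lambda>y. - sqrt y) -` {-1..1} \<inter> {0..1} = {0..1::real}" by (auto simp: sqrt_ge_m1)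
  have "\<mu>' {0..1} = mat 1" using mm unfolding matrix_measure_def by auto
  then show "symz \<mu>' {-1..1} = mat 1"
    unfolding symz_def using mm_conc[OF mm p1] mm_conc[OF mm p2] i1 i2 by (simp add: scaleR_2[symmetric])
qed

lemma symz_int:
  assumes mm: "matrix_measure 0 1 \<mu>'"
  shows "mat_moment (-1) 1 (symz \<mu>') k $ i $ j
     = (signed_integral 0 1 (\<lambda>B. \<mu>' B $ i $ j) (\<lambda>y. sqrt y ^ k) + signed_integral 0 1 (\<lambda>B. \<mu>' B $ i $ j) (\<lambda>y. (- sqrt y) ^ k)) / 2"
proof -
  have s: "signed_borel_measure 0 1 (\<lambda>B. \<mu>' B $ i $ j)" using mm_entries[OF mm] .
  have "mat_moment (-1) 1 (symz \<mu>') k $ i $ j = signed_integral (-1) 1 (\<lambda>B. symz \<mu>' B $ i $ j) (\<lambda>x. x ^ k)"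
    unfolding mat_moment_def by simp
  also have "\<dots> = (signed_integral (-1) 1 (\<lambda>B. \<mu>' (sqrt -` B) $ i $ j) (\<lambda>x. x ^ k)
       + signed_integral (-1) 1 (\<lambda>B. \<mu>' ((\<lambda>y. - sqrt y) -` B) $ i $ j) (\<lambda>x. x ^ k)) / 2"
    unfolding symz_entry
    by (rule avg_integral[OF push_sbm[OF s rt_meas(1) rt_maps(1)] push_sbm[OF s rt_meas(2) rt_maps(2)] _ pow_bound]) simp
  also have "\<dots> = (signed_integral 0 1 (\<lambda>B. \<mu>' B $ i $ j) (\<lambda>y. sqrt y ^ k) + signed_integral 0 1 (\<lambda>B. \<mu>' B $ i $ j) (\<lambda>y. (- sqrt y) ^ k)) / 2"
    using push_integral[OF s rt_meas(1) rt_maps(1) _ pow_bound, of k] push_integral[OF s rt_meas(2) rt_maps(2) _ pow_bound, of k]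
    by simp
  finally show ?thesis .
qed

lemma sqrt_pow_bound: "\<forall>y\<in>{0..1::real}. \<bar>sqrt y ^ k\<bar> \<le> 1"
  by (auto simp: power_abs intro!: power_le_one)

lemma symz_mom:
  assumes mm: "matrix_measure 0 1 \<mu>'"
  shows "mat_moment (-1) 1 (symz \<mu>') (2*m) = mat_moment 0 1 \<mu>' m"
    and "mat_moment (-1) 1 (symz \<mu>') (Suc (2*m)) = 0"
proof -
  have e: "mat_moment (-1) 1 (symz \<mu>') (2*m) $ i $ j = mat_moment 0 1 \<mu>' m $ i $ j" for i j
  proof -
    have s: "signed_borel_measure 0 1 (\<lambda>B. \<mu>' B $ i $ j)" using mm_entries[OF mm] .
    have a1: "signed_integral 0 1 (\<lambda>B. \<mu>' B $ i $ j) (\<lambda>y. y ^ m) = signed_integral 0 1 (\<lambda>B. \<mu>' B $ i $ j) (\<lambda>y. sqrt y ^ (2*m))"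
      by (rule signed_integral_cong_fun[OF s _ _ pow_bound]) (auto simp: power_mult)
    have a2: "signed_integral 0 1 (\<lambda>B. \<mu>' B $ i $ j) (\<lambda>y. y ^ m) = signed_integral 0 1 (\<lambda>B. \<mu>' B $ i $ j) (\<lambda>y. (- sqrt y) ^ (2*m))"
      by (rule signed_integral_cong_fun[OF s _ _ pow_bound]) (auto simp: power_mult)
    show ?thesis unfolding symz_int[OF mm] using a1 a2 by (simp add: mat_moment_def)
  qed
  then show "mat_moment (-1) 1 (symz \<mu>') (2*m) = mat_moment 0 1 \<mu>' m" by (simp add: vec_eq_iff)
  have o: "mat_moment (-1) 1 (symz \<mu>') (Suc (2*m)) $ i $ j = 0" for i j
  proof -
    have s: "signed_borel_measure 0 1 (\<lambda>B. \<mu>' B $ i $ j)" using mm_entries[OF mm] .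
    have f: "(\<lambda>y. (- sqrt y) ^ Suc (2*m)) = (\<lambda>y. - (sqrt y ^ Suc (2*m)))" by simp
    have "signed_integral 0 1 (\<lambda>B. \<mu>' B $ i $ j) (\<lambda>y. (- sqrt y) ^ Suc (2*m))
        = - signed_integral 0 1 (\<lambda>B. \<mu>' B $ i $ j) (\<lambda>y. sqrt y ^ Suc (2*m))"
      unfolding f by (rule signed_integral_neg[OF s _ sqrt_pow_bound]) simp
    then show ?thesis unfolding symz_int[OF mm] by simp
  qed
  then show "mat_moment (-1) 1 (symz \<mu>') (Suc (2*m)) = 0" by (simp add: vec_eq_iff)
qed

lemma mm_empty: assumes "matrix_measure a b \<nu>" shows "\<nu> {} = 0"
proof -
  have "\<nu> {} $ i $ j = 0" for i j
  proof -
    obtain M1 M2 where r: "signed_rep a b (\<lambda>B. \<nu> B $ i $ j) M1 M2"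
      using mm_entries[OF assms] unfolding signed_borel_measure_def by blast
    then show ?thesis unfolding signed_rep_def by auto
  qed
  then show ?thesis by (simp add: vec_eq_iff)
qed

lemma sym_odd:
  fixes \<sigma> :: "real set \<Rightarrow> real^'p^'p"
  assumes ms: "matrix_measure (-1) 1 \<sigma>" and sym: "\<forall>B\<in>sets borel. \<sigma> B = \<sigma> (uminus -` B)"
  shows "mat_moment (-1) 1 \<sigma> (Suc (2*m)) = 0"
proof -
  have maps: "\<forall>x\<in>{-1..1::real}. uminus x \<in> {-1..1}" by auto
  have um: "(uminus :: real \<Rightarrow> real) \<in> borel_measurable borel" by simp
  have e: "mat_moment (-1) 1 \<sigma> k = mat_moment (-1) 1 (\<lambda>B. \<sigma> (uminus -` B)) k" for k
    unfolding mat_moment_def using sym by (simp add: vec_eq_iff, intro allI signed_integral_cong) auto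
  have "mat_moment (-1) 1 \<sigma> (Suc (2*m)) $ i $ j = 0" for i j
  proof -
    have s: "signed_borel_measure (-1) 1 (\<lambda>B. \<sigma> B $ i $ j)" using mm_entries[OF ms] .
    have f: "(\<lambda>x::real. (- x) ^ Suc (2*m)) = (\<lambda>x. - (x ^ Suc (2*m)))" by simp
    have "mat_moment (-1) 1 \<sigma> (Suc (2*m)) $ i $ j = signed_integral (-1) 1 (\<lambda>B. \<sigma> B $ i $ j) (\<lambda>x. (- x) ^ Suc (2*m))"
      unfolding e moment_push[OF ms um maps] by simp
    also have "\<dots> = - signed_integral (-1) 1 (\<lambda>B. \<sigma> B $ i $ j) (\<lambda>x. x ^ Suc (2*m))"
      unfolding f by (rule signed_integral_neg[OF s _ pow_bound]) simp
    also have "\<dots> = - (mat_moment (-1) 1 \<sigma> (Suc (2*m)) $ i $ j)" by (simp add: mat_moment_def)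
    finally show ?thesis by simp
  qed
  then show ?thesis by (simp add: vec_eq_iff)
qed

lemma sq_pre: "(0::real) \<le> t \<Longrightarrow> (\<lambda>x. x^2) -` {..t} = {-sqrt t..sqrt t}"
  by (auto, (metis abs_le_iff minus_le_iff real_le_rsqrt real_sqrt_abs real_sqrt_le_iff sqrt_le_D)+)

lemma sym_even:
  fixes \<mu> \<sigma> :: "real set \<Rightarrow> real^'p^'p"
  assumes mm: "matrix_measure 0 1 \<mu>" and ms: "matrix_measure (-1) 1 \<sigma>"
    and rel: "\<forall>x \<in> {0..1}. \<sigma> {-x..x} = \<mu> {0..x^2}"
  shows "mat_moment (-1) 1 \<sigma> (2*j) = mat_moment 0 1 \<mu> j"
proof -
  let ?\<mu>0 = "\<lambda>B. \<sigma> ((\<lambda>x. x^2) -` B)"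
  have mm0: "matrix_measure 0 1 ?\<mu>0" by (rule sq_mm[OF ms])
  have at: "?\<mu>0 {..t} = \<mu> {..t}" for t
  proof (cases "t < 0")
    case True
    have "x^2 \<le> t \<Longrightarrow> False" for x :: real using True zero_le_power2[of x] by linarith
    then have "(\<lambda>x::real. x^2) -` {..t} = {}" by auto
    moreover have "{..t} \<inter> {0..1} = {}" using True by auto
    ultimately show ?thesis using mm_empty[OF ms] mm_empty[OF mm] mm_conc[OF mm, of "{..t}"] by simp
  next
    case False
    then have t: "0 \<le> t" by simp
    have mt: "\<mu> {..t} = \<mu> ({..t} \<inter> {0..1})" using mm_conc[OF mm, of "{..t}"] by simp
    show ?thesis
    proof (cases "t \<le> 1")
      case True
      have "sqrt t \<in> {0..1}" using t True by auto
      then have "\<sigma> {-sqrt t..sqrt t} = \<mu> {0..t}" using rel t by auto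
      moreover have "{..t} \<inter> {0..1} = {0..t}" using True t by auto
      ultimately show ?thesis using sq_pre[OF t] mt True by (simp add: min_absorb1)
    next
      case False
      have st: "1 < sqrt t" using False by simp
      have "\<sigma> {-sqrt t..sqrt t} = \<sigma> ({-sqrt t..sqrt t} \<inter> {-1..1})" using mm_conc[OF ms, of "{-sqrt t..sqrt t}"] by simp
      also have "{-sqrt t..sqrt t} \<inter> {-1..1} = {-1..1::real}" using st by auto
      finally have "\<sigma> {-sqrt t..sqrt t} = mat 1" using ms unfolding matrix_measure_def by simp
      moreover have "{..t} \<inter> {0..1} = {0..1}" using False by auto
      ultimately show ?thesis using sq_pre[OF t] mt mm unfolding matrix_measure_def by simp
    qed
  qed
  have eqB: "\<forall>B\<in>sets borel. ?\<mu>0 B = \<mu> B" by (rule mm_uniq[OF mm0 mm at])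
  have "mat_moment 0 1 ?\<mu>0 j = mat_moment 0 1 \<mu> j"
    unfolding mat_moment_def using eqB by (simp add: vec_eq_iff, intro allI signed_integral_cong) auto
  then show ?thesis using sq_mom[OF ms] by simp
qed

lemma partC_even:
  fixes \<mu> \<sigma> :: "real set \<Rightarrow> real^'p^'p"
  assumes mm: "matrix_measure 0 1 \<mu>" and ms: "matrix_measure (-1) 1 \<sigma>"
    and sym: "\<forall>B\<in>sets borel. \<sigma> B = \<sigma> (uminus -` B)"
    and rel: "\<forall>x \<in> {0..1}. \<sigma> {-x..x} = \<mu> {0..x^2}"
  shows "canonical_moment (-1) 1 \<sigma> (2*n) = canonical_moment 0 1 \<mu> n"
proof -
  have ev: "mat_moment (-1) 1 \<sigma> (2*j) = mat_moment 0 1 \<mu> j" for j using sym_even[OF mm ms rel] .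
  have od: "mat_moment (-1) 1 \<sigma> (Suc (2*j)) = 0" for j using sym_odd[OF ms sym] .
  have R: "moment_range (-1) 1 \<sigma> (2*n) = moment_range 0 1 \<mu> n"
  proof
    show "moment_range (-1) 1 \<sigma> (2*n) \<subseteq> moment_range 0 1 \<mu> n"
    proof
      fix T assume "T \<in> moment_range (-1) 1 \<sigma> (2*n)"
      then obtain \<sigma>' where \<sigma>': "matrix_measure (-1) 1 \<sigma>'" "\<forall>j<2*n. mat_moment (-1) 1 \<sigma>' j = mat_moment (-1) 1 \<sigma> j"
        and T: "T = mat_moment (-1) 1 \<sigma>' (2*n)" unfolding moment_range_def by auto
      show "T \<in> moment_range 0 1 \<mu> n" unfolding moment_range_def
      proof (intro CollectI exI conjI allI impI)
        show "matrix_measure 0 1 (\<lambda>B. \<sigma>' ((\<lambda>x. x^2) -` B))" by (rule sq_mm[OF \<sigma>'(1)])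
        fix j assume "j < n"
        then show "mat_moment 0 1 (\<lambda>B. \<sigma>' ((\<lambda>x. x^2) -` B)) j = mat_moment 0 1 \<mu> j"
          using sq_mom[OF \<sigma>'(1)] \<sigma>'(2) ev by simp
      next
        show "mat_moment 0 1 (\<lambda>B. \<sigma>' ((\<lambda>x. x^2) -` B)) n = T" using sq_mom[OF \<sigma>'(1)] T by simp
      qed
    qed
    show "moment_range 0 1 \<mu> n \<subseteq> moment_range (-1) 1 \<sigma> (2*n)"
    proof
      fix T assume "T \<in> moment_range 0 1 \<mu> n"
      then obtain \<mu>' where \<mu>': "matrix_measure 0 1 \<mu>'" "\<forall>j<n. mat_moment 0 1 \<mu>' j = mat_moment 0 1 \<mu> j"
        and T: "T = mat_moment 0 1 \<mu>' n" unfolding moment_range_def by auto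
      show "T \<in> moment_range (-1) 1 \<sigma> (2*n)" unfolding moment_range_def
      proof (intro CollectI exI conjI allI impI)
        show "matrix_measure (-1) 1 (symz \<mu>')" by (rule symz_mm[OF \<mu>'(1)])
        fix j assume j: "j < 2*n"
        show "mat_moment (-1) 1 (symz \<mu>') j = mat_moment (-1) 1 \<sigma> j"
        proof (cases "even j")
          case True
          define i where "i = j div 2"
          have i: "j = 2 * i" using True unfolding i_def by presburger
          then have "i < n" using j by simp
          then show ?thesis unfolding i using symz_mom(1)[OF \<mu>'(1)] \<mu>'(2) ev by simp
        next
          case False
          define i where "i = j div 2"
          have i: "j = Suc (2 * i)" using False unfolding i_def by presburger
          show ?thesis unfolding i by (simp only: symz_mom(2)[OF \<mu>'(1)] od)
        qed
      next
        show "mat_moment (-1) 1 (symz \<mu>') (2*n) = T" using symz_mom(1)[OF \<mu>'(1)] T by simp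
      qed
    qed
  qed
  have R': "moment_range (-1) 1 \<sigma> (2*n) = (\<lambda>T. 1 *\<^sub>R T + 0) ` moment_range 0 1 \<mu> n"
    using R by simp
  have Tk: "mat_moment (-1) 1 \<sigma> (2*n) = 1 *\<^sub>R mat_moment 0 1 \<mu> n + 0" using ev by simp
  show ?thesis by (rule canon_transfer[where c=1 and C=0]) (use R ev in simp_all)
qed

lemma L1:
  "\<forall>(\<mu> :: real set \<Rightarrow> real^'p^'p) (a::real) (b::real) (n::nat).
      matrix_measure 0 1 \<mu> \<and> a < b \<and> 1 \<le> n \<and>
      canonical_moment 0 1 \<mu> n \<noteq> None \<and>
      canonical_moment a b (\<lambda>B. \<mu> ((\<lambda>x. (b - a) * x + a) -` B)) n \<noteq> None
      \<longrightarrow> canonical_moment a b (\<lambda>B. \<mu> ((\<lambda>x. (b - a) * x + a) -` B)) n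
          = canonical_moment 0 1 \<mu> n"
  using partA by blast

lemma L2:
  "\<forall>(\<mu> :: real set \<Rightarrow> real^'p^'p) (a::real) (b::real) (n::nat).
      a < b \<and> matrix_measure a b \<mu> \<and>
      (\<forall>B \<in> sets borel. \<mu> B = \<mu> ((\<lambda>x. a + b - x) -` B)) \<and> 1 \<le> n \<and>
      canonical_moment a b \<mu> (2 * n - 1) \<noteq> None
      \<longrightarrow> canonical_moment a b \<mu> (2 * n - 1) = Some ((1/2) *\<^sub>R mat 1)"
proof (intro allI impI)
  fix \<mu> :: "real set \<Rightarrow> real^'p^'p" and a b :: real and n :: nat
  assume h: "a < b \<and> matrix_measure a b \<mu> \<and>
      (\<forall>B \<in> sets borel. \<mu> B = \<mu> ((\<lambda>x. a + b - x) -` B)) \<and> 1 \<le> n \<and>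
      canonical_moment a b \<mu> (2 * n - 1) \<noteq> None"
  have n1: "1 \<le> n" using h by blast
  have "odd (2 * n - 1)" using n1 by presburger
  then show "canonical_moment a b \<mu> (2 * n - 1) = Some ((1/2) *\<^sub>R mat 1)"
    using partB h by blast
qed

lemma L3:
  "\<forall>(\<mu> :: real set \<Rightarrow> real^'p^'p) (\<sigma> :: real set \<Rightarrow> real^'p^'p).
      matrix_measure 0 1 \<mu> \<and> matrix_measure (-1) 1 \<sigma> \<and>
      (\<forall>B \<in> sets borel. \<sigma> B = \<sigma> (uminus -` B)) \<and>
      (\<forall>x \<in> {0..1}. \<sigma> {-x..x} = \<mu> {0..x^2})
      \<longrightarrow> (\<forall>n::nat. 1 \<le> n \<longrightarrow>
            (canonical_moment (-1) 1 \<sigma> (2 * n - 1) \<noteq> None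
               \<longrightarrow> canonical_moment (-1) 1 \<sigma> (2 * n - 1) = Some ((1/2) *\<^sub>R mat 1)) \<and>
            (canonical_moment (-1) 1 \<sigma> (2 * n) \<noteq> None \<and> canonical_moment 0 1 \<mu> n \<noteq> None
               \<longrightarrow> canonical_moment (-1) 1 \<sigma> (2 * n) = canonical_moment 0 1 \<mu> n))"
proof (intro allI impI conjI)
  fix \<mu> \<sigma> :: "real set \<Rightarrow> real^'p^'p" and n :: nat
  assume h: "matrix_measure 0 1 \<mu> \<and> matrix_measure (-1) 1 \<sigma> \<and>
      (\<forall>B \<in> sets borel. \<sigma> B = \<sigma> (uminus -` B)) \<and>
      (\<forall>x \<in> {0..1}. \<sigma> {-x..x} = \<mu> {0..x^2})"
    and n: "1 \<le> n"
  have um: "(\<lambda>x::real. -1 + 1 - x) = uminus" by auto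
  have sym': "\<forall>B \<in> sets borel. \<sigma> B = \<sigma> ((\<lambda>x. -1 + 1 - x) -` B)" using h unfolding um by blast
  have "odd (2 * n - 1)" using n by presburger
  then show "canonical_moment (-1) 1 \<sigma> (2 * n - 1) \<noteq> None \<Longrightarrow>
      canonical_moment (-1) 1 \<sigma> (2 * n - 1) = Some ((1/2) *\<^sub>R mat 1)"
    using partB[of "-1" 1 \<sigma> "2 * n - 1"] h sym' by simp
  show "canonical_moment (-1) 1 \<sigma> (2 * n) = canonical_moment 0 1 \<mu> n"
    using partC_even h by blast
qed

theorem lemma3p1:
  shows
  "(\<forall>(\<mu> :: real set \<Rightarrow> real^'p^'p) (a::real) (b::real) (n::nat).
      matrix_measure 0 1 \<mu> \<and> a < b \<and> 1 \<le> n \<and>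
      canonical_moment 0 1 \<mu> n \<noteq> None \<and>
      canonical_moment a b (\<lambda>B. \<mu> ((\<lambda>x. (b - a) * x + a) -` B)) n \<noteq> None
      \<longrightarrow> canonical_moment a b (\<lambda>B. \<mu> ((\<lambda>x. (b - a) * x + a) -` B)) n
          = canonical_moment 0 1 \<mu> n)
   \<and>
   (\<forall>(\<mu> :: real set \<Rightarrow> real^'p^'p) (a::real) (b::real) (n::nat).
      a < b \<and> matrix_measure a b \<mu> \<and>
      (\<forall>B \<in> sets borel. \<mu> B = \<mu> ((\<lambda>x. a + b - x) -` B)) \<and> 1 \<le> n \<and>
      canonical_moment a b \<mu> (2 * n - 1) \<noteq> None
      \<longrightarrow> canonical_moment a b \<mu> (2 * n - 1) = Some ((1/2) *\<^sub>R mat 1))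
   \<and>
   (\<forall>(\<mu> :: real set \<Rightarrow> real^'p^'p) (\<sigma> :: real set \<Rightarrow> real^'p^'p).
      matrix_measure 0 1 \<mu> \<and> matrix_measure (-1) 1 \<sigma> \<and>
      (\<forall>B \<in> sets borel. \<sigma> B = \<sigma> (uminus -` B)) \<and>
      (\<forall>x \<in> {0..1}. \<sigma> {-x..x} = \<mu> {0..x^2})
      \<longrightarrow> (\<forall>n::nat. 1 \<le> n \<longrightarrow>
            (canonical_moment (-1) 1 \<sigma> (2 * n - 1) \<noteq> None
               \<longrightarrow> canonical_moment (-1) 1 \<sigma> (2 * n - 1) = Some ((1/2) *\<^sub>R mat 1)) \<and>
            (canonical_moment (-1) 1 \<sigma> (2 * n) \<noteq> None \<and> canonical_moment 0 1 \<mu> n \<noteq> None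
               \<longrightarrow> canonical_moment (-1) 1 \<sigma> (2 * n) = canonical_moment 0 1 \<mu> n)))"
  using L1 L2 L3 by blast

end
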